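(* Let $F$ be a cumulative distribution function of a probability distribution supported on $\mathcal{S}$, twice continuously differentiable on $\mathcal{S}$, and let $\boldsymbol{X}_1,\boldsymbol{X}_2,\dots$ be i.i.d. with c.d.f. $F$. Let $\boldsymbol{x}\in\mathrm{Int}(\mathcal{S})$ be such that $0<F(\boldsymbol{x})<1$. Then $$n^{1/2}\big(F_{n,m}^{\star}(\boldsymbol{x}) - F_m^{\star}(\boldsymbol{x})\big)\xrightarrow{\ \mathscr{D}\ }\mathcal{N}(0,\sigma^2(\boldsymbol{x})),\quad\text{as } m,n\to\infty.$$ Moreover, as $m,n\to\infty$, $n^{1/2}(F_{n,m}^{\star}(\boldsymbol{x})-F(\boldsymbol{x}))\xrightarrow{\mathscr{D}}\mathcal{N}(0,\sigma^2(\boldsymbol{x}))$ if $n^{1/2}m^{-1}\to0$, and $n^{1/2}(F_{n,m}^{\star}(\boldsymbol{x})-F(\boldsymbol{x}))\xrightarrow{\mathscr{D}}\mathcal{N}(\lambda B(\boldsymbol{x}),\sigma^2(\boldsymbol{x}))$ if $n^{1/2}m^{-1}\to\lambda$ for a constant $\lambda>0$.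
   Context: Let $d\ge1$, $\|\boldsymbol{x}\|_1=\sum_i|x_i|$, $\mathcal{S}:=\{\boldsymbol{x}\in[0,1]^d:\|\boldsymbol{x}\|_1\le1\}$, $\mathrm{Int}(\mathcal{S}):=\{\boldsymbol{x}\in(0,1)^d:\|\boldsymbol{x}\|_1<1\}$. For $\boldsymbol{k}\in\mathbb{N}_0^d$ with $\|\boldsymbol{k}\|_1\le m$ (written $\boldsymbol{k}\in\mathbb{N}_0^d\cap m\mathcal{S}$), $P_{\boldsymbol{k},m}(\boldsymbol{x}) := \frac{m!}{(m-\|\boldsymbol{k}\|_1)!\prod_i k_i!}(1-\|\boldsymbol{x}\|_1)^{m-\|\boldsymbol{k}\|_1}\prod_i x_i^{k_i}$. $F_m^{\star}(\boldsymbol{x}) := \sum_{\boldsymbol{k}\in\mathbb{N}_0^d\cap m\mathcal{S}}F(\boldsymbol{k}/m)P_{\boldsymbol{k},m}(\boldsymbol{x})$; $F_n(\boldsymbol{x}) := n^{-1}\sum_{i=1}^n\mathbf{1}\{\boldsymbol{X}_i\le\boldsymbol{x}\}$ (componentwise); $F_{n,m}^{\star}(\boldsymbol{x}) := \sum_{\boldsymbol{k}\in\mathbb{N}_0^d\cap m\mathcal{S}}F_n(\boldsymbol{k}/m)P_{\boldsymbol{k},m}(\boldsymbol{x})$. Here $\sigma^2(\boldsymbol{x}) := F(\boldsymbol{x})(1-F(\boldsymbol{x}))$ and $B(\boldsymbol{x}) := \frac12\sum_{i,j=1}^d(x_i\mathbf{1}_{\{i=j\}}-x_ix_j)\frac{\partial^2}{\partial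 x_i\partial x_j}F(\boldsymbol{x})$. Throughout $m=m(n)$. *)

theory Defs
  imports "HOL-Probability.Probability"
begin

definition l1norm :: "real ^ 'd \<Rightarrow> real" where
  "l1norm x = (\<Sum>i\<in>UNIV. \<bar>x $ i\<bar>)"

definition simplexS :: "(real ^ 'd) set" where
  "simplexS = {x. (\<forall>i. 0 \<le> x $ i \<and> x $ i \<le> 1) \<and> l1norm x \<le> 1}"

definition simplexInt :: "(real ^ 'd) set" where
  "simplexInt = {x. (\<forall>i. 0 < x $ i \<and> x $ i < 1) \<and> l1norm x < 1}"

definition multi_idx :: "nat \<Rightarrow> (nat ^ 'd) set" where
  "multi_idx m = {k. (\<Sum>i\<in>UNIV. k $ i) \<le> m}"

definition norm1_idx :: "nat ^ 'd \<Rightarrow> nat" where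
  "norm1_idx k = (\<Sum>i\<in>UNIV. k $ i)"

definition bern_P :: "nat ^ 'd \<Rightarrow> nat \<Rightarrow> real ^ 'd \<Rightarrow> real" where
  "bern_P k m x =
     fact m / (fact (m - norm1_idx k) * (\<Prod>i\<in>UNIV. fact (k $ i)))
     * (1 - l1norm x) ^ (m - norm1_idx k) * (\<Prod>i\<in>UNIV. (x $ i) ^ (k $ i))"

definition bernstein :: "(real ^ 'd \<Rightarrow> real) \<Rightarrow> nat \<Rightarrow> real ^ 'd \<Rightarrow> real" where
  "bernstein G m x = (\<Sum>k\<in>multi_idx m. G (\<chi> i. real (k $ i) / real m) * bern_P k m x)"

definition mcdf :: "(real ^ 'd) measure \<Rightarrow> real ^ 'd \<Rightarrow> real" where
  "mcdf \<mu> x = measure \<mu> {y. \<forall>i. y $ i \<le> x $ i}"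

text \<open>Empirical c.d.f. of the sample X_1..X_n (here indexed 0..n-1).\<close>
definition ecdf :: "(nat \<Rightarrow> 'a \<Rightarrow> real ^ 'd) \<Rightarrow> nat \<Rightarrow> 'a \<Rightarrow> real ^ 'd \<Rightarrow> real" where
  "ecdf X n \<omega> x = (\<Sum>i<n. (if (\<forall>j. X i \<omega> $ j \<le> x $ j) then 1 else 0)) / real n"

definition normal_distr :: "real \<Rightarrow> real \<Rightarrow> real measure" where
  "normal_distr mu v = density lborel (normal_density mu (sqrt v))"

end

theory Submission
  imports Defs
begin


lemma norm1_minus_axis:
  fixes k :: "nat^'d::finite"
  assumes "1 \<le> k $ i"
  shows "norm1_idx (k - axis i 1) = norm1_idx k - 1" and "norm1_idx k \<ge> 1"
proof -
  have "norm1_idx k = k $ i + (\<Sum>j\<in>UNIV-{i}. k $ j)"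
    unfolding norm1_idx_def by (simp add: sum.remove[of UNIV i])
  moreover have "norm1_idx (k - axis i 1) = (k $ i - 1) + (\<Sum>j\<in>UNIV-{i}. k $ j)"
    unfolding norm1_idx_def by (simp add: sum.remove[of UNIV i] axis_def)
  ultimately show "norm1_idx (k - axis i 1) = norm1_idx k - 1" "norm1_idx k \<ge> 1" using assms by auto
qed

lemma fact_minus_axis:
  fixes k :: "nat^'d::finite"
  assumes "1 \<le> k $ i"
  shows "(\<Prod>j\<in>UNIV. fact ((k - axis i 1) $ j) :: real) * real (k $ i) = (\<Prod>j\<in>UNIV. fact (k $ j))"
proof -
  have a: "(\<Prod>j\<in>UNIV. fact ((k - axis i 1) $ j) :: real) = fact (k $ i - 1) * (\<Prod>j\<in>UNIV-{i}. fact (k $ j))"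
    by (simp add: prod.remove[of UNIV i] axis_def)
  have b: "(\<Prod>j\<in>UNIV. fact (k $ j) :: real) = fact (k $ i) * (\<Prod>j\<in>UNIV-{i}. fact (k $ j))"
    by (simp add: prod.remove[of UNIV i])
  have c: "fact (k $ i) = (fact (k $ i - 1) :: real) * real (k $ i)"
    using assms by (metis Suc_diff_1 fact_Suc less_le_trans less_numeral_extra(1) mult.commute of_nat_Suc of_nat_mult)
  show ?thesis unfolding a b c by simp
qed

lemma pow_minus_axis:
  fixes k :: "nat^'d::finite" and x :: "real^'d"
  assumes "1 \<le> k $ i"
  shows "x $ i * (\<Prod>j\<in>UNIV. (x $ j) ^ ((k - axis i 1) $ j)) = (\<Prod>j\<in>UNIV. (x $ j) ^ (k $ j))"
proof -
  have a: "(\<Prod>j\<in>UNIV. (x $ j) ^ ((k - axis i 1) $ j)) = (x $ i) ^ (k $ i - 1) * (\<Prod>j\<in>UNIV-{i}. (x $ j) ^ (k $ j))"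
    by (simp add: prod.remove[of UNIV i] axis_def)
  have b: "(\<Prod>j\<in>UNIV. (x $ j) ^ (k $ j)) = (x $ i) ^ (k $ i) * (\<Prod>j\<in>UNIV-{i}. (x $ j) ^ (k $ j))"
    by (simp add: prod.remove[of UNIV i])
  have c: "(x $ i) ^ (k $ i) = x $ i * (x $ i) ^ (k $ i - 1)"
    using assms by (metis Suc_diff_1 less_le_trans less_numeral_extra(1) power_Suc)
  show ?thesis unfolding a b c by simp
qed

lemma bern_P_rec:
  fixes k :: "nat^'d::finite" and x :: "real^'d"
  assumes "norm1_idx k \<le> Suc m"
  shows "bern_P k (Suc m) x = (if norm1_idx k \<le> m then (1 - l1norm x) * bern_P k m x else 0)
     + (\<Sum>i\<in>UNIV. if 1 \<le> k $ i then x $ i * bern_P (k - axis i 1) m x else 0)"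
proof -
  define n where "n = norm1_idx k"
  define D where "D = (\<Prod>j\<in>UNIV. fact (k $ j) :: real)"
  define X where "X = (\<Prod>j\<in>UNIV. (x $ j) ^ (k $ j))"
  define L where "L = 1 - l1norm x"
  define C where "C = fact m / (fact (Suc m - n) * D) * L ^ (Suc m - n) * X"
  have Dpos: "D > 0" unfolding D_def by (intro prod_pos) auto
  have lhs: "bern_P k (Suc m) x = C * real (Suc m)"
    unfolding bern_P_def C_def D_def[symmetric] X_def[symmetric] L_def[symmetric] n_def[symmetric]
    by (simp add: fact_Suc field_simps)
  have t1: "(if n \<le> m then L * bern_P k m x else 0) = C * real (Suc m - n)"
  proof (cases "n \<le> m")
    case True
    then have "Suc m - n = Suc (m - n)" by simp
    have *: "L * (fact m / (fact j * D) * L ^ j * X) = fact m / (fact (Suc j) * D) * L ^ (Suc j) * X * real (Suc j)" for j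
    proof -
      have "real (Suc j) \<noteq> 0" "fact j \<noteq> (0::real)" "D \<noteq> 0" using Dpos by auto
      have g: "a \<noteq> 0 \<Longrightarrow> L * (c / (f * D) * P * X) = c / (a * f * D) * (L * P) * X * a" for a c f P :: real
        by (simp add: field_simps)
      show ?thesis by (simp only: fact_Suc of_nat_mult power_Suc) (rule g, simp)
    qed
    show ?thesis using True *[of "m - n"]
      unfolding bern_P_def C_def D_def[symmetric] X_def[symmetric] L_def[symmetric] n_def[symmetric]
      \<open>Suc m - n = Suc (m - n)\<close> by simp
  next
    case False
    then show ?thesis using assms n_def by simp
  qed
  have t2: "(if 1 \<le> k $ i then x $ i * bern_P (k - axis i 1) m x else 0) = C * real (k $ i)" for i
  proof (cases "1 \<le> k $ i")
    case True
    have n1: "norm1_idx (k - axis i 1) = n - 1" "n \<ge> 1" using norm1_minus_axis[OF True] n_def by auto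
    have e: "m - (n - 1) = Suc m - n" using n1 by simp
    have f: "(\<Prod>j\<in>UNIV. fact ((k - axis i 1) $ j) :: real) = D / real (k $ i)"
      using fact_minus_axis[OF True] True unfolding D_def by (simp add: field_simps)
    have g: "x $ i * (\<Prod>j\<in>UNIV. (x $ j) ^ ((k - axis i 1) $ j)) = X"
      using pow_minus_axis[OF True] X_def by simp
    have "x $ i * bern_P (k - axis i 1) m x
       = fact m / (fact (Suc m - n) * (D / real (k $ i))) * L ^ (Suc m - n) * (x $ i * (\<Prod>j\<in>UNIV. (x $ j) ^ ((k - axis i 1) $ j)))"
      unfolding bern_P_def n1 e f L_def by simp
    also have "\<dots> = C * real (k $ i)" unfolding g C_def using True Dpos by (simp add: field_simps)
    finally show ?thesis using True by simp
  next
    case False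
    then show ?thesis by simp
  qed
  have "(if n \<le> m then L * bern_P k m x else 0) + (\<Sum>i\<in>UNIV. if 1 \<le> k $ i then x $ i * bern_P (k - axis i 1) m x else 0)
     = C * real (Suc m - n) + C * real n"
    unfolding t1 t2 by (simp add: sum_distrib_left n_def norm1_idx_def)
  also have "\<dots> = C * real (Suc m)" using assms n_def by (simp add: distrib_left[symmetric] of_nat_diff)
  finally show ?thesis unfolding lhs n_def L_def by simp
qed


definition Ebern :: "nat \<Rightarrow> (nat^'d::finite \<Rightarrow> real) \<Rightarrow> real^'d \<Rightarrow> real" where
  "Ebern m G x = (\<Sum>k\<in>multi_idx m. G k * bern_P k m x)"

lemma finite_multi_idx: "finite (multi_idx m :: (nat^'d::finite) set)"
proof -
  have sub: "multi_idx m \<subseteq> vec_lambda ` (PiE UNIV (\<lambda>_. {..m}))"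
  proof (rule subsetI)
    fix k assume "k \<in> multi_idx m"
    then have s: "(\<Sum>i\<in>UNIV. k $ i) \<le> m" unfolding multi_idx_def by simp
    have b: "k $ i \<le> m" for i
      using member_le_sum[of i UNIV "\<lambda>i. k $ i"] s by simp
    have "vec_nth k \<in> PiE UNIV (\<lambda>_. {..m})" using b by auto
    moreover have "k = vec_lambda (vec_nth k)" by simp
    ultimately show "k \<in> vec_lambda ` (PiE UNIV (\<lambda>_. {..m}))" by blast
  qed
  have "finite (vec_lambda ` (PiE UNIV (\<lambda>_. {..m})) :: (nat^'d) set)"
    by (intro finite_imageI finite_PiE) auto
  with sub show ?thesis by (rule finite_subset)
qed

lemma norm1_plus_axis: "norm1_idx (k + axis i 1) = norm1_idx (k::nat^'d::finite) + 1"
proof -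
  have "norm1_idx k = k $ i + (\<Sum>j\<in>UNIV-{i}. k $ j)"
    unfolding norm1_idx_def by (simp add: sum.remove[of UNIV i])
  moreover have "norm1_idx (k + axis i 1) = (k $ i + 1) + (\<Sum>j\<in>UNIV-{i}. k $ j)"
    unfolding norm1_idx_def by (simp add: sum.remove[of UNIV i] axis_def)
  ultimately show ?thesis by simp
qed

lemma multi_idx_norm1: "multi_idx m = {k. norm1_idx k \<le> m}"
  unfolding multi_idx_def norm1_idx_def by simp


lemma shift_image:
  "multi_idx (Suc m) \<inter> {k. 1 \<le> k $ i} = (\<lambda>k. k + axis i 1) ` (multi_idx m :: (nat^'d::finite) set)"
proof (rule set_eqI, rule iffI)
  fix k :: "nat^'d" assume "k \<in> multi_idx (Suc m) \<inter> {k. 1 \<le> k $ i}"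
  then have k: "norm1_idx k \<le> Suc m" "1 \<le> k $ i" by (auto simp: multi_idx_norm1)
  have eq: "k = (k - axis i 1) + axis i 1" using k(2)
    by (simp add: vec_eq_iff axis_def)
  have "norm1_idx (k - axis i 1) \<le> m" using norm1_minus_axis[OF k(2)] k(1) by simp
  then have "k - axis i 1 \<in> multi_idx m" by (simp add: multi_idx_norm1)
  with eq show "k \<in> (\<lambda>k. k + axis i 1) ` multi_idx m" by (rule image_eqI)
next
  fix k' :: "nat^'d" assume "k' \<in> (\<lambda>k. k + axis i 1) ` multi_idx m"
  then obtain k where k: "k \<in> multi_idx m" "k' = k + axis i 1" by blast
  have "norm1_idx k' \<le> Suc m" using k norm1_plus_axis[of k i] by (simp add: multi_idx_norm1)
  moreover have "1 \<le> k' $ i" using k(2) by (simp add: axis_def)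
  ultimately show "k' \<in> multi_idx (Suc m) \<inter> {k. 1 \<le> k $ i}" by (simp add: multi_idx_norm1)
qed
lemma Ebern_Suc:
  fixes x :: "real^'d::finite"
  shows "Ebern (Suc m) G x = (1 - l1norm x) * Ebern m G x + (\<Sum>i\<in>UNIV. x $ i * Ebern m (\<lambda>k. G (k + axis i 1)) x)"
proof -
  let ?I = "multi_idx (Suc m) :: (nat^'d) set"
  have fin: "finite ?I" by (rule finite_multi_idx)
  have sub: "multi_idx m \<subseteq> ?I" by (auto simp: multi_idx_norm1)
  have inner: "(\<Sum>k\<in>?I. if k \<in> {k. 1 \<le> k $ i} then G k * bern_P (k - axis i 1) m x else 0)
      = Ebern m (\<lambda>k. G (k + axis i 1)) x" for i :: 'd
  proof -
    have inj: "inj_on (\<lambda>k. k + axis i 1) (multi_idx m :: (nat^'d) set)"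
      by (auto simp: inj_on_def)
    have "(\<Sum>k\<in>?I. if k \<in> {k. 1 \<le> k $ i} then G k * bern_P (k - axis i 1) m x else 0)
       = (\<Sum>k\<in>(\<lambda>k. k + axis i 1) ` multi_idx m. G k * bern_P (k - axis i 1) m x)"
      unfolding sum.If_cases[OF fin] shift_image[symmetric] by (simp add: Int_def)
    also have "\<dots> = Ebern m (\<lambda>k. G (k + axis i 1)) x"
      unfolding sum.reindex[OF inj] Ebern_def by simp
    finally show ?thesis .
  qed
  have "Ebern (Suc m) G x = (\<Sum>k\<in>?I. G k * ((if norm1_idx k \<le> m then (1 - l1norm x) * bern_P k m x else 0)
     + (\<Sum>i\<in>UNIV. if 1 \<le> k $ i then x $ i * bern_P (k - axis i 1) m x else 0)))"
    unfolding Ebern_def by (intro sum.cong refl) (simp add: bern_P_rec multi_idx_norm1)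
  also have "\<dots> = (1 - l1norm x) * (\<Sum>k\<in>?I. if k \<in> multi_idx m then G k * bern_P k m x else 0)
     + (\<Sum>i\<in>UNIV. x $ i * (\<Sum>k\<in>?I. if k \<in> {k. 1 \<le> k $ i} then G k * bern_P (k - axis i 1) m x else 0))"
  proof -
    have "\<And>k. G k * ((if norm1_idx k \<le> m then (1 - l1norm x) * bern_P k m x else 0)
     + (\<Sum>i\<in>UNIV. if 1 \<le> k $ i then x $ i * bern_P (k - axis i 1) m x else 0))
     = (1 - l1norm x) * (if k \<in> multi_idx m then G k * bern_P k m x else 0)
     + (\<Sum>i\<in>UNIV. x $ i * (if k \<in> {k. 1 \<le> k $ i} then G k * bern_P (k - axis i 1) m x else 0))"
      by (auto simp: multi_idx_norm1 distrib_left sum_distrib_left intro!: sum.cong)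
    then show ?thesis
      by (simp only: sum.distrib sum_distrib_left[symmetric] sum.swap[of _ UNIV ?I])
  qed
  also have "(\<Sum>k\<in>?I. if k \<in> multi_idx m then G k * bern_P k m x else 0) = Ebern m G x"
    unfolding sum.If_cases[OF fin] Ebern_def by (simp add: Int_absorb1[OF sub])
  also have "(\<Sum>i\<in>UNIV. x $ i * (\<Sum>k\<in>?I. if k \<in> {k. 1 \<le> k $ i} then G k * bern_P (k - axis i 1) m x else 0))
     = (\<Sum>i\<in>UNIV. x $ i * Ebern m (\<lambda>k. G (k + axis i 1)) x)" by (simp only: inner)
  finally show ?thesis .
qed


lemma Ebern_add: "Ebern m (\<lambda>k. G k + H k) x = Ebern m G x + Ebern m H x"
  unfolding Ebern_def by (simp add: distrib_right sum.distrib)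

lemma Ebern_diff: "Ebern m (\<lambda>k. G k - H k) x = Ebern m G x - Ebern m H x"
  unfolding Ebern_def by (simp add: left_diff_distrib sum_subtractf)

lemma Ebern_cmult: "Ebern m (\<lambda>k. c * G k) x = c * Ebern m G x"
  unfolding Ebern_def by (simp add: sum_distrib_left mult.assoc)

lemma Ebern_sum: "Ebern m (\<lambda>k. \<Sum>i\<in>I. G i k) x = (\<Sum>i\<in>I. Ebern m (G i) x)"
  unfolding Ebern_def by (simp add: sum_distrib_right sum.swap[of _ I])

lemma Ebern_cong: "(\<And>k. k \<in> multi_idx m \<Longrightarrow> G k = H k) \<Longrightarrow> Ebern m G x = Ebern m H x"
  unfolding Ebern_def by simp

lemma multi_idx_0: "multi_idx 0 = {0 :: nat^'d::finite}"
  by (auto simp: multi_idx_def vec_eq_iff)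

lemma Ebern_0: "Ebern 0 G (x::real^'d::finite) = G 0"
  unfolding Ebern_def multi_idx_0 bern_P_def norm1_idx_def by simp

lemma axis_nth_plus: "(k + axis l 1) $ i = k $ i + (if i = l then 1 else (0::nat))"
  by (simp add: axis_def)

lemma sum_if_eq: "(\<Sum>l\<in>UNIV. x $ l * (if i = l then a else 0)) = x $ i * (a::real)"
  by (simp add: if_distrib cong: if_cong)

locale bx =
  fixes x :: "real^'d::finite"
  assumes l1: "l1norm x = (\<Sum>i\<in>UNIV. x $ i)"
begin

lemma M0: "Ebern m (\<lambda>k. 1) x = 1"
proof (induction m)
  case 0 then show ?case by (simp add: Ebern_0)
next
  case (Suc m) then show ?case by (simp add: Ebern_Suc l1)
qed

lemma Ebern_const: "Ebern m (\<lambda>k. c) x = c"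
  using Ebern_cmult[of m c "\<lambda>k. 1" x] M0 by simp

lemma coord: "Ebern (Suc m) (\<lambda>k. g (k $ i)) x = Ebern m (\<lambda>k. (1 - x $ i) * g (k $ i) + x $ i * g (k $ i + 1)) x"
proof -
  have "(\<Sum>l\<in>UNIV. x $ l * Ebern m (\<lambda>k. g ((k + axis l 1) $ i)) x)
      = (\<Sum>l\<in>UNIV. (if l = i then x $ i * Ebern m (\<lambda>k. g (k $ i + 1)) x else x $ l * Ebern m (\<lambda>k. g (k $ i)) x))"
    by (intro sum.cong refl) (auto simp: axis_def)
  also have "\<dots> = x $ i * Ebern m (\<lambda>k. g (k $ i + 1)) x + (\<Sum>l\<in>UNIV-{i}. x $ l) * Ebern m (\<lambda>k. g (k $ i)) x"
    by (simp add: sum.remove[of UNIV i] sum_distrib_right)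
  also have "(\<Sum>l\<in>UNIV-{i}. x $ l) = l1norm x - x $ i"
    by (simp add: l1 sum.remove[of UNIV i])
  finally have S: "(\<Sum>l\<in>UNIV. x $ l * Ebern m (\<lambda>k. g ((k + axis l 1) $ i)) x)
      = x $ i * Ebern m (\<lambda>k. g (k $ i + 1)) x + (l1norm x - x $ i) * Ebern m (\<lambda>k. g (k $ i)) x" .
  have T: "Ebern m (\<lambda>k. (1 - x $ i) * g (k $ i) + x $ i * g (k $ i + 1)) x
     = (1 - x $ i) * Ebern m (\<lambda>k. g (k $ i)) x + x $ i * Ebern m (\<lambda>k. g (k $ i + 1)) x"
    by (simp only: Ebern_add Ebern_cmult)
  show ?thesis unfolding Ebern_Suc S T by (simp add: algebra_simps)
qed

lemma B1: "Ebern m (\<lambda>k. real (k $ i)) x = real m * x $ i"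
proof (induction m)
  case 0 then show ?case by (simp add: Ebern_0)
next
  case (Suc m)
  have "Ebern (Suc m) (\<lambda>k. real (k $ i)) x = Ebern m (\<lambda>k. real (k $ i) + x $ i) x"
    by (subst coord) (simp add: algebra_simps)
  then show ?case using Suc by (simp add: Ebern_add Ebern_const algebra_simps)
qed

lemma C1: "Ebern m (\<lambda>k. real (k $ i) - real m * x $ i) x = 0"
  by (simp add: Ebern_diff B1 Ebern_const)

lemma C2: "Ebern m (\<lambda>k. (real (k $ i) - real m * x $ i)^2) x = real m * x $ i * (1 - x $ i)"
proof (induction m)
  case 0 then show ?case by (simp add: Ebern_0)
next
  case (Suc m)
  let ?p = "x $ i"
  let ?u = "\<lambda>k. real (k $ i) - real m * ?p"
  have "Ebern (Suc m) (\<lambda>k. (real (k $ i) - real (Suc m) * ?p)^2) x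
      = Ebern m (\<lambda>k. (1 - ?p) * (?u k - ?p)^2 + ?p * (?u k + 1 - ?p)^2) x"
    by (subst coord) (simp add: algebra_simps)
  also have "\<dots> = Ebern m (\<lambda>k. (?u k)^2 + ?p * (1 - ?p)) x"
    by (intro Ebern_cong) (simp add: power2_eq_square algebra_simps)
  also have "\<dots> = Ebern m (\<lambda>k. (?u k)^2) x + ?p * (1 - ?p)"
    by (simp only: Ebern_add Ebern_const)
  also have "\<dots> = real m * ?p * (1 - ?p) + ?p * (1 - ?p)" using Suc by simp
  finally show ?case by (simp add: algebra_simps)
qed

lemma C4: "Ebern m (\<lambda>k. (real (k $ i) - real m * x $ i)^4) x \<le> 3 * (real m)^2"
  if "0 \<le> x $ i" "x $ i \<le> 1"
proof (induction m)
  case 0 then show ?case by (simp add: Ebern_0)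
next
  case (Suc m)
  let ?p = "x $ i"
  let ?u = "\<lambda>k. real (k $ i) - real m * ?p"
  have "Ebern (Suc m) (\<lambda>k. (real (k $ i) - real (Suc m) * ?p)^4) x
      = Ebern m (\<lambda>k. (1 - ?p) * (?u k - ?p)^4 + ?p * (?u k + 1 - ?p)^4) x"
    by (subst coord) (simp add: algebra_simps)
  also have "\<dots> = Ebern m (\<lambda>k. (?u k)^4 + (6 * ?p * (1 - ?p)) * (?u k)^2
        + (4 * ?p * (1 - ?p) * (1 - 2 * ?p)) * ?u k + ?p * (1 - ?p) * (?p^3 + (1 - ?p)^3)) x"
    by (intro Ebern_cong) (simp add: power2_eq_square power3_eq_cube power4_eq_xxxx algebra_simps)
  also have "\<dots> = Ebern m (\<lambda>k. (?u k)^4) x + (6 * ?p * (1 - ?p)) * (real m * ?p * (1 - ?p))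
        + ?p * (1 - ?p) * (?p^3 + (1 - ?p)^3)"
    by (simp only: Ebern_add Ebern_cmult Ebern_const C1 C2)
  also have "\<dots> \<le> 3 * (real m)^2 + 6 * real m + 1"
  proof -
    have a: "?p * (1 - ?p) \<le> 1" "0 \<le> ?p * (1 - ?p)" using that by (auto simp: mult_le_one)
    have b: "?p^3 + (1 - ?p)^3 \<le> 1"
    proof -
      have "?p^3 \<le> ?p^1" "(1 - ?p)^3 \<le> (1 - ?p)^1" using that by (intro power_decreasing; simp)+
      then show ?thesis by simp
    qed
    have c: "(6 * ?p * (1 - ?p)) * (real m * ?p * (1 - ?p)) \<le> 6 * real m"
    proof -
      have "(6 * ?p * (1 - ?p)) * (real m * ?p * (1 - ?p)) = 6 * real m * ((?p * (1 - ?p)) * (?p * (1 - ?p)))"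
        by (simp add: algebra_simps)
      also have "\<dots> \<le> 6 * real m * 1" using a that by (intro mult_left_mono mult_le_one) auto
      finally show ?thesis by simp
    qed
    have d: "?p * (1 - ?p) * (?p^3 + (1 - ?p)^3) \<le> 1"
      using a b by (meson mult_le_one order_trans zero_le_power add_nonneg_nonneg that le_diff_eq diff_ge_0_iff_ge)
    show ?thesis using Suc c d by linarith
  qed
  also have "\<dots> \<le> 3 * (real (Suc m))^2" by (simp add: power2_eq_square algebra_simps)
  finally show ?case .
qed

lemma M2cross: "i \<noteq> j \<Longrightarrow> Ebern m (\<lambda>k. real (k $ i) * real (k $ j)) x = real m * (real m - 1) * x $ i * x $ j"
proof (induction m)
  case 0 then show ?case by (simp add: Ebern_0)
next
  case (Suc m)
  have e: "Ebern m (\<lambda>k. real ((k + axis l 1) $ i) * real ((k + axis l 1) $ j)) x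
     = real m * (real m - 1) * x $ i * x $ j + (if i = l then real m * x $ j else 0) + (if j = l then real m * x $ i else 0)" for l
  proof -
    have "Ebern m (\<lambda>k. real ((k + axis l 1) $ i) * real ((k + axis l 1) $ j)) x
       = Ebern m (\<lambda>k. real (k $ i) * real (k $ j) + (if i = l then 1 else 0) * real (k $ j) + (if j = l then 1 else 0) * real (k $ i)) x"
      using Suc.prems by (intro Ebern_cong) (auto simp: axis_def algebra_simps)
    also have "\<dots> = Ebern m (\<lambda>k. real (k $ i) * real (k $ j)) x + (if i = l then 1 else 0) * Ebern m (\<lambda>k. real (k $ j)) x
       + (if j = l then 1 else 0) * Ebern m (\<lambda>k. real (k $ i)) x"
      by (simp only: Ebern_add Ebern_cmult)
    finally show ?thesis using Suc by (simp add: B1)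
  qed
  have S2: "(\<Sum>l\<in>UNIV. x $ l * Ebern m (\<lambda>k. real ((k + axis l 1) $ i) * real ((k + axis l 1) $ j)) x)
      = (\<Sum>l\<in>UNIV. x $ l) * (real m * (real m - 1) * x $ i * x $ j) + x $ i * (real m * x $ j) + x $ j * (real m * x $ i)"
    unfolding e by (simp add: distrib_left sum.distrib sum_distrib_right sum_if_eq)
  show ?case unfolding Ebern_Suc S2 Suc.IH[OF Suc.prems] l1 by (simp add: algebra_simps)
qed

end


definition kv :: "nat \<Rightarrow> nat^'d::finite \<Rightarrow> real^'d" where
  "kv m k = (\<chi> i. real (k $ i) / real m)"

lemma bernstein_Ebern: "bernstein G m x = Ebern m (\<lambda>k. G (kv m k)) x"
  by (simp add: bernstein_def Ebern_def kv_def)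

lemma kv_in_S:
  assumes "m > 0" "k \<in> multi_idx m"
  shows "kv m k \<in> simplexS"
proof -
  have s: "(\<Sum>i\<in>UNIV. k $ i) \<le> m" using assms(2) by (simp add: multi_idx_def)
  have b: "k $ i \<le> m" for i using member_le_sum[of i UNIV "\<lambda>i. k $ i"] s by simp
  have "l1norm (kv m k) = (\<Sum>i\<in>UNIV. real (k $ i)) / real m"
    unfolding l1norm_def kv_def by (simp add: sum_divide_distrib)
  also have "\<dots> \<le> 1" using s assms(1)
    by (simp add: divide_le_eq_1 of_nat_sum[symmetric] del: of_nat_sum)
  finally show ?thesis unfolding simplexS_def using b assms(1) by (auto simp: kv_def divide_le_eq_1)
qed

locale bxs = bx x for x :: "real^'d::finite" +
  assumes nonneg: "\<And>i. 0 \<le> x $ i" and le1: "l1norm x \<le> 1"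
begin

lemma xle1: "x $ i \<le> 1"
proof -
  have "x $ i \<le> (\<Sum>j\<in>UNIV. x $ j)" using nonneg by (intro member_le_sum) auto
  then show ?thesis using le1 l1 by simp
qed

lemma bern_P_nonneg: "0 \<le> bern_P k m x"
  unfolding bern_P_def using le1 nonneg by (intro mult_nonneg_nonneg prod_nonneg zero_le_power divide_nonneg_nonneg) auto

lemma Ebern_mono: "(\<And>k. k \<in> multi_idx m \<Longrightarrow> G k \<le> H k) \<Longrightarrow> Ebern m G x \<le> Ebern m H x"
  unfolding Ebern_def by (intro sum_mono mult_right_mono bern_P_nonneg) auto

lemma Ebern_nonneg: "(\<And>k. k \<in> multi_idx m \<Longrightarrow> 0 \<le> G k) \<Longrightarrow> 0 \<le> Ebern m G x"
  using Ebern_mono[of m "\<lambda>_. 0" G] Ebern_const[of m 0] by simp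

lemma Ebern_abs: "\<bar>Ebern m G x\<bar> \<le> Ebern m (\<lambda>k. \<bar>G k\<bar>) x"
proof -
  have "Ebern m G x \<le> Ebern m (\<lambda>k. \<bar>G k\<bar>) x" by (rule Ebern_mono) auto
  moreover have "- Ebern m G x \<le> Ebern m (\<lambda>k. \<bar>G k\<bar>) x"
    using Ebern_mono[of m "\<lambda>k. - G k" "\<lambda>k. \<bar>G k\<bar>"] Ebern_cmult[of m "-1" G x] by simp
  ultimately show ?thesis by simp
qed

lemma hv_comp: "kv m k $ i - x $ i = (real (k $ i) - real m * x $ i) / real m" if "m > 0"
  using that by (simp add: kv_def field_simps)

lemma H1: "m > 0 \<Longrightarrow> Ebern m (\<lambda>k. (kv m k - x) $ i) x = 0"
  using Ebern_cmult[of m "1 / real m" "\<lambda>k. real (k $ i) - real m * x $ i" x] C1[of m i]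
  by (simp add: hv_comp)

lemma H2: "m > 0 \<Longrightarrow> Ebern m (\<lambda>k. (kv m k - x) $ i * (kv m k - x) $ j) x
   = ((if i = j then x $ i else 0) - x $ i * x $ j) / real m"
proof -
  assume m: "m > 0"
  have "Ebern m (\<lambda>k. (kv m k - x) $ i * (kv m k - x) $ j) x
     = Ebern m (\<lambda>k. (1 / (real m)^2) * ((real (k $ i) - real m * x $ i) * (real (k $ j) - real m * x $ j))) x"
    using m by (intro Ebern_cong) (simp add: hv_comp power2_eq_square)
  also have "\<dots> = (1 / (real m)^2) * Ebern m (\<lambda>k. (real (k $ i) - real m * x $ i) * (real (k $ j) - real m * x $ j)) x"
    by (rule Ebern_cmult)
  also have "Ebern m (\<lambda>k. (real (k $ i) - real m * x $ i) * (real (k $ j) - real m * x $ j)) x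
      = real m * ((if i = j then x $ i else 0) - x $ i * x $ j)"
  proof (cases "i = j")
    case True
    then show ?thesis using C2[of m i] by (simp add: power2_eq_square algebra_simps)
  next
    case False
    have "Ebern m (\<lambda>k. (real (k $ i) - real m * x $ i) * (real (k $ j) - real m * x $ j)) x
      = Ebern m (\<lambda>k. real (k $ i) * real (k $ j) - (real m * x $ j) * real (k $ i) - (real m * x $ i) * real (k $ j)
          + real m * x $ i * (real m * x $ j)) x"
      by (intro Ebern_cong) (simp add: algebra_simps)
    also have "\<dots> = Ebern m (\<lambda>k. real (k $ i) * real (k $ j)) x - (real m * x $ j) * Ebern m (\<lambda>k. real (k $ i)) x
       - (real m * x $ i) * Ebern m (\<lambda>k. real (k $ j)) x + real m * x $ i * (real m * x $ j)"
      by (simp only: Ebern_add Ebern_diff Ebern_cmult Ebern_const)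
    also have "\<dots> = real m * ((if i = j then x $ i else 0) - x $ i * x $ j)"
      using False by (simp add: M2cross B1 algebra_simps)
    finally show ?thesis .
  qed
  finally show ?thesis using m by (simp add: power2_eq_square)
qed

lemma norm2_vec: "(norm (v :: real^'d))^2 = (\<Sum>i\<in>UNIV. (v $ i)^2)"
  unfolding norm_vec_def L2_set_def by (simp add: sum_nonneg)

lemma N2: "m > 0 \<Longrightarrow> Ebern m (\<lambda>k. (norm (kv m k - x))^2) x \<le> real CARD('d) / real m"
proof -
  assume m: "m > 0"
  have "Ebern m (\<lambda>k. (norm (kv m k - x))^2) x = (\<Sum>i\<in>UNIV. Ebern m (\<lambda>k. (kv m k - x) $ i * (kv m k - x) $ i) x)"
    by (simp only: norm2_vec Ebern_sum) (simp add: power2_eq_square)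
  also have "\<dots> = (\<Sum>i\<in>UNIV. (x $ i - x $ i * x $ i) / real m)"
  proof (rule sum.cong[OF refl])
    fix i show "Ebern m (\<lambda>k. (kv m k - x) $ i * (kv m k - x) $ i) x = (x $ i - x $ i * x $ i) / real m"
      using H2[OF m, of i i] by simp
  qed
  also have "\<dots> \<le> (\<Sum>i\<in>(UNIV::'d set). 1 / real m)"
  proof (intro sum_mono divide_right_mono)
    fix i
    have "0 \<le> x $ i * x $ i" using nonneg[of i] by simp
    then show "x $ i - x $ i * x $ i \<le> 1" using xle1[of i] by linarith
  qed simp
  finally show ?thesis by simp
qed

lemma N4: "m > 0 \<Longrightarrow> Ebern m (\<lambda>k. (norm (kv m k - x))^4) x \<le> 3 * (real CARD('d))^2 / (real m)^2"
proof -
  assume m: "m > 0"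
  have "Ebern m (\<lambda>k. (norm (kv m k - x))^4) x \<le> Ebern m (\<lambda>k. real CARD('d) * (\<Sum>i\<in>UNIV. ((kv m k - x) $ i)^4)) x"
  proof (rule Ebern_mono)
    fix k :: "nat^'d"
    have "(norm (kv m k - x))^4 = ((norm (kv m k - x))^2)^2" by simp
    also have "\<dots> = (\<Sum>i\<in>UNIV. ((kv m k - x) $ i)^2)^2"
      by (simp only: norm2_vec)
    also have "\<dots> \<le> (\<Sum>i\<in>UNIV. (((kv m k - x) $ i)^2)^2) * real CARD('d)"
      using sum_squared_le_sum_of_squares[of "\<lambda>i. ((kv m k - x) $ i)^2" "UNIV :: 'd set"] by simp
    finally show "(norm (kv m k - x))^4 \<le> real CARD('d) * (\<Sum>i\<in>UNIV. ((kv m k - x) $ i)^4)"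
      by (simp add: mult.commute flip: power_mult)
  qed
  also have "\<dots> = real CARD('d) * (\<Sum>i\<in>UNIV. Ebern m (\<lambda>k. ((kv m k - x) $ i)^4) x)"
    by (simp only: Ebern_cmult Ebern_sum)
  also have "\<dots> \<le> real CARD('d) * (\<Sum>i\<in>(UNIV::'d set). 3 / (real m)^2)"
  proof (intro mult_left_mono sum_mono)
    fix i
    have "Ebern m (\<lambda>k. ((kv m k - x) $ i)^4) x = Ebern m (\<lambda>k. (1 / (real m)^4) * (real (k $ i) - real m * x $ i)^4) x"
      using m by (intro Ebern_cong) (simp add: hv_comp power_divide)
    also have "\<dots> = (1 / (real m)^4) * Ebern m (\<lambda>k. (real (k $ i) - real m * x $ i)^4) x" by (rule Ebern_cmult)
    also have "\<dots> \<le> (1 / (real m)^4) * (3 * (real m)^2)"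
      using C4[of i m] nonneg xle1 by (intro mult_left_mono) auto
    also have "\<dots> = 3 / (real m)^2" using m by (simp add: field_simps power2_eq_square power4_eq_xxxx)
    finally show "Ebern m (\<lambda>k. ((kv m k - x) $ i)^4) x \<le> 3 / (real m)^2" .
  qed simp
  also have "\<dots> = 3 * (real CARD('d))^2 / (real m)^2" by (simp add: power2_eq_square)
  finally show ?thesis .
qed

end


context bxs begin

lemma x_in_S: "x \<in> simplexS"
  unfolding simplexS_def using nonneg xle1 le1 by auto

lemma Ebern_nonneg': "0 \<le> Ebern m (\<lambda>k. \<bar>G k\<bar>) x"
  by (rule Ebern_nonneg) simp

lemma bern_conv0:
  assumes K: "\<And>y. y \<in> simplexS \<Longrightarrow> \<bar>g y\<bar> \<le> K"
    and loc: "\<And>e. e > 0 \<Longrightarrow> \<exists>d>0. \<forall>y\<in>simplexS. norm (y - x) < d \<longrightarrow> \<bar>g y\<bar> \<le> e"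
  shows "(\<lambda>m. Ebern m (\<lambda>k. \<bar>g (kv m k)\<bar>) x) \<longlonglongrightarrow> 0"
proof (rule LIMSEQ_I)
  fix e :: real assume e: "e > 0"
  obtain d where d: "d > 0" "\<And>y. y \<in> simplexS \<Longrightarrow> norm (y - x) < d \<Longrightarrow> \<bar>g y\<bar> \<le> e / 2"
    using loc[of "e/2"] e by auto
  have K0: "0 \<le> K" using K[OF x_in_S] by simp
  define c where "c = K * real CARD('d) / d^2"
  have c0: "0 \<le> c" unfolding c_def using K0 d by simp
  obtain N :: nat where N: "2 * c / e < real N" using reals_Archimedean2 by blast
  have "norm (Ebern m (\<lambda>k. \<bar>g (kv m k)\<bar>) x - 0) < e" if m: "m \<ge> Suc N" for m
  proof -
    have m0: "m > 0" using m by simp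
    have pt: "\<bar>g (kv m k)\<bar> \<le> e / 2 + (K / d^2) * (norm (kv m k - x))^2" if k: "k \<in> multi_idx m" for k
    proof (cases "norm (kv m k - x) < d")
      case True
      then have "\<bar>g (kv m k)\<bar> \<le> e / 2" using d(2) kv_in_S[OF m0 k] by blast
      moreover have "0 \<le> (K / d^2) * (norm (kv m k - x))^2" using K0 by simp
      ultimately show ?thesis by linarith
    next
      case False
      then have "d^2 \<le> (norm (kv m k - x))^2" using d(1) by (intro power_mono) auto
      then have "1 \<le> (norm (kv m k - x))^2 / d^2" using d(1) by simp
      then have "K \<le> K * ((norm (kv m k - x))^2 / d^2)" using K0 by (metis mult.right_neutral mult_left_mono)
      then have "\<bar>g (kv m k)\<bar> \<le> (K / d^2) * (norm (kv m k - x))^2" using K[OF kv_in_S[OF m0 k]] by simp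
      then show ?thesis using e by linarith
    qed
    have "Ebern m (\<lambda>k. \<bar>g (kv m k)\<bar>) x \<le> Ebern m (\<lambda>k. e / 2 + (K / d^2) * (norm (kv m k - x))^2) x"
      by (rule Ebern_mono) (rule pt)
    also have "\<dots> = e / 2 + (K / d^2) * Ebern m (\<lambda>k. (norm (kv m k - x))^2) x"
      by (simp only: Ebern_add Ebern_cmult Ebern_const)
    also have "\<dots> \<le> e / 2 + (K / d^2) * (real CARD('d) / real m)"
      using N2[OF m0] K0 d by (intro add_left_mono mult_left_mono) auto
    also have "(K / d^2) * (real CARD('d) / real m) = c / real m" unfolding c_def by simp
    also have "c / real m < e / 2"
    proof -
      have "2 * c / e < real m" using N m by linarith
      then show ?thesis using e m0 by (simp add: field_simps)
    qed
    finally have "Ebern m (\<lambda>k. \<bar>g (kv m k)\<bar>) x < e" by simp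
    then show ?thesis using Ebern_nonneg'[of m "\<lambda>k. g (kv m k)"] by simp
  qed
  then show "\<exists>no. \<forall>n\<ge>no. norm (Ebern n (\<lambda>k. \<bar>g (kv n k)\<bar>) x - 0) < e" by blast
qed

lemma bern_rem:
  assumes C: "\<And>y. y \<in> simplexS \<Longrightarrow> \<bar>r y\<bar> \<le> C * (norm (y - x))^2"
    and loc: "\<And>e. e > 0 \<Longrightarrow> \<exists>d>0. \<forall>y\<in>simplexS. norm (y - x) < d \<longrightarrow> \<bar>r y\<bar> \<le> e * (norm (y - x))^2"
  shows "(\<lambda>m. real m * Ebern m (\<lambda>k. \<bar>r (kv m k)\<bar>) x) \<longlonglongrightarrow> 0"
proof (rule LIMSEQ_I)
  fix e :: real assume e: "e > 0"
  define n where "n = real CARD('d)"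
  have n0: "n > 0" unfolding n_def by simp
  obtain d where d: "d > 0" "\<And>y. y \<in> simplexS \<Longrightarrow> norm (y - x) < d \<Longrightarrow> \<bar>r y\<bar> \<le> (e / (2 * n)) * (norm (y - x))^2"
    using loc[of "e / (2 * n)"] e n0 by auto
  define C' where "C' = max C 0"
  have C': "\<And>y. y \<in> simplexS \<Longrightarrow> \<bar>r y\<bar> \<le> C' * (norm (y - x))^2" "0 \<le> C'"
  proof -
    show "0 \<le> C'" unfolding C'_def by simp
    fix y :: "real^'d" assume y: "y \<in> simplexS"
    have "C * (norm (y - x))^2 \<le> C' * (norm (y - x))^2" unfolding C'_def by (intro mult_right_mono) auto
    then show "\<bar>r y\<bar> \<le> C' * (norm (y - x))^2" using C[OF y] by linarith
  qed
  define c where "c = C' * 3 * n^2 / d^2"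
  have c0: "0 \<le> c" unfolding c_def using C' d by simp
  obtain N :: nat where N: "2 * c / e < real N" using reals_Archimedean2 by blast
  have "norm (real m * Ebern m (\<lambda>k. \<bar>r (kv m k)\<bar>) x - 0) < e" if m: "m \<ge> Suc N" for m
  proof -
    have m0: "m > 0" using m by simp
    have pt: "\<bar>r (kv m k)\<bar> \<le> (e / (2 * n)) * (norm (kv m k - x))^2 + (C' / d^2) * (norm (kv m k - x))^4"
      if k: "k \<in> multi_idx m" for k
    proof (cases "norm (kv m k - x) < d")
      case True
      then have "\<bar>r (kv m k)\<bar> \<le> (e / (2 * n)) * (norm (kv m k - x))^2" using d(2) kv_in_S[OF m0 k] by blast
      moreover have "0 \<le> (C' / d^2) * (norm (kv m k - x))^4" using C' by simp
      ultimately show ?thesis by linarith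
    next
      case False
      let ?q = "(norm (kv m k - x))^2"
      have "d^2 \<le> ?q" using False d(1) by (intro power_mono) auto
      then have "1 \<le> ?q / d^2" using d(1) by simp
      then have "?q \<le> ?q * (?q / d^2)" by (metis mult.right_neutral mult_left_mono zero_le_power2)
      also have "\<dots> = (norm (kv m k - x))^4 / d^2" by (simp add: power2_eq_square power4_eq_xxxx)
      finally have "C' * ?q \<le> C' * ((norm (kv m k - x))^4 / d^2)" using C'(2) by (rule mult_left_mono)
      then have "\<bar>r (kv m k)\<bar> \<le> (C' / d^2) * (norm (kv m k - x))^4"
        using C'(1)[OF kv_in_S[OF m0 k]] by simp
      moreover have "0 \<le> (e / (2 * n)) * (norm (kv m k - x))^2" using e n0 by simp
      ultimately show ?thesis by linarith
    qed
    have "Ebern m (\<lambda>k. \<bar>r (kv m k)\<bar>) x \<le> Ebern m (\<lambda>k. (e / (2 * n)) * (norm (kv m k - x))^2 + (C' / d^2) * (norm (kv m k - x))^4) x"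
      by (rule Ebern_mono) (rule pt)
    also have "\<dots> = (e / (2 * n)) * Ebern m (\<lambda>k. (norm (kv m k - x))^2) x + (C' / d^2) * Ebern m (\<lambda>k. (norm (kv m k - x))^4) x"
      by (simp only: Ebern_add Ebern_cmult)
    also have "\<dots> \<le> (e / (2 * n)) * (n / real m) + (C' / d^2) * (3 * n^2 / (real m)^2)"
      using N2[OF m0] N4[OF m0] C' d e n0 unfolding n_def by (intro add_mono mult_left_mono) auto
    finally have "real m * Ebern m (\<lambda>k. \<bar>r (kv m k)\<bar>) x \<le> real m * ((e / (2 * n)) * (n / real m) + (C' / d^2) * (3 * n^2 / (real m)^2))"
      by (rule mult_left_mono) simp
    also have "\<dots> = e / 2 + c / real m" using m0 n0 d unfolding c_def by (simp add: field_simps power2_eq_square)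
    also have "c / real m < e / 2"
    proof -
      have "2 * c / e < real m" using N m by linarith
      then show ?thesis using e m0 by (simp add: field_simps)
    qed
    finally have "real m * Ebern m (\<lambda>k. \<bar>r (kv m k)\<bar>) x < e" by simp
    moreover have "0 \<le> real m * Ebern m (\<lambda>k. \<bar>r (kv m k)\<bar>) x" using Ebern_nonneg'[of m "\<lambda>k. r (kv m k)"] by simp
    ultimately show ?thesis by simp
  qed
  then show "\<exists>no. \<forall>n\<ge>no. norm (real n * Ebern n (\<lambda>k. \<bar>r (kv n k)\<bar>) x - 0) < e" by blast
qed

end


lemma convex_simplexS: "convex (simplexS :: (real^'d::finite) set)"
proof (rule convexI)
  fix u v :: "real^'d" and a b :: real
  assume u: "u \<in> simplexS" and v: "v \<in> simplexS" and ab: "0 \<le> a" "0 \<le> b" "a + b = 1"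
  have uc: "0 \<le> u $ i" "u $ i \<le> 1" "0 \<le> v $ i" "v $ i \<le> 1" for i using u v by (auto simp: simplexS_def)
  have c: "0 \<le> (a *\<^sub>R u + b *\<^sub>R v) $ i" "(a *\<^sub>R u + b *\<^sub>R v) $ i \<le> 1" for i
  proof -
    show "0 \<le> (a *\<^sub>R u + b *\<^sub>R v) $ i" using uc[of i] ab by simp
    have "a * u $ i + b * v $ i \<le> a * 1 + b * 1" using uc[of i] ab by (intro add_mono mult_left_mono) auto
    then show "(a *\<^sub>R u + b *\<^sub>R v) $ i \<le> 1" using ab by simp
  qed
  have lu: "(\<Sum>i\<in>UNIV. u $ i) \<le> 1" "(\<Sum>i\<in>UNIV. v $ i) \<le> 1"
    using u v uc by (auto simp: simplexS_def l1norm_def)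
  have "l1norm (a *\<^sub>R u + b *\<^sub>R v) = a * (\<Sum>i\<in>UNIV. u $ i) + b * (\<Sum>i\<in>UNIV. v $ i)"
    unfolding l1norm_def using c(1) by (simp add: sum.distrib sum_distrib_left)
  also have "\<dots> \<le> a * 1 + b * 1" using lu ab by (intro add_mono mult_left_mono) auto
  finally show "a *\<^sub>R u + b *\<^sub>R v \<in> simplexS" using c ab unfolding simplexS_def by auto
qed

lemma compact_simplexS: "compact (simplexS :: (real^'d::finite) set)"
unfolding compact_eq_bounded_closed proof (rule conjI)
  have "simplexS \<subseteq> cbox (0::real^'d) 1"
    by (auto simp: simplexS_def mem_box_cart)
  then show "bounded (simplexS :: (real^'d) set)" by (rule bounded_subset[OF bounded_cbox])
  have "simplexS = {y::real^'d. (\<forall>i. 0 \<le> y $ i \<and> y $ i \<le> 1) \<and> (\<Sum>i\<in>UNIV. \<bar>y $ i\<bar>) \<le> 1}"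
    by (simp add: simplexS_def l1norm_def)
  also have "closed \<dots>"
    by (intro closed_Collect_conj closed_Collect_all closed_Collect_le continuous_intros)
  finally show "closed (simplexS :: (real^'d) set)" .
qed

lemma quad_bound:
  fixes M :: "real^'d^'d::finite" and h :: "real^'d"
  shows "\<bar>h \<bullet> (M *v h)\<bar> \<le> (real CARD('d))^2 * norm M * (norm h)^2"
proof -
  have "h \<bullet> (M *v h) = (\<Sum>i\<in>UNIV. \<Sum>j\<in>UNIV. h $ i * M $ i $ j * h $ j)"
    by (simp add: inner_vec_def matrix_vector_mult_def sum_distrib_left mult_ac)
  also have "\<bar>\<dots>\<bar> \<le> (\<Sum>i\<in>UNIV. \<Sum>j\<in>UNIV. \<bar>h $ i * M $ i $ j * h $ j\<bar>)"
    by (rule order_trans[OF sum_abs sum_mono]) (rule sum_abs)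
  also have "\<dots> \<le> (\<Sum>i\<in>(UNIV::'d set). \<Sum>j\<in>(UNIV::'d set). norm h * norm M * norm h)"
  proof (intro sum_mono)
    fix i j
    have "\<bar>M $ i $ j\<bar> \<le> norm M"
      using component_le_norm_cart[of "M $ i" j] Finite_Cartesian_Product.norm_nth_le[where x=M and i=i] by linarith
    then show "\<bar>h $ i * M $ i $ j * h $ j\<bar> \<le> norm h * norm M * norm h"
      unfolding abs_mult
      by (intro mult_mono component_le_norm_cart) auto
  qed
  also have "\<dots> = (real CARD('d))^2 * norm M * (norm h)^2" by (simp add: power2_eq_square)
  finally show ?thesis .
qed

lemma onorm_mult_le: "\<bar>c\<bar> \<le> B \<Longrightarrow> onorm (\<lambda>u::real. u * c) \<le> B"
proof (rule onorm_le)
  fix u :: real assume "\<bar>c\<bar> \<le> B"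
  then have "\<bar>u\<bar> * \<bar>c\<bar> \<le> \<bar>u\<bar> * B" by (intro mult_left_mono) auto
  then show "norm (u * c) \<le> B * norm u" by (simp add: abs_mult mult.commute)
qed

locale tay =
  fixes F :: "real^'d::finite \<Rightarrow> real" and DF :: "real^'d \<Rightarrow> real^'d" and D2F :: "real^'d \<Rightarrow> real^'d^'d"
  assumes d1: "\<And>y. y \<in> simplexS \<Longrightarrow> (F has_derivative (\<lambda>h. DF y \<bullet> h)) (at y within simplexS)"
    and d2: "\<And>y. y \<in> simplexS \<Longrightarrow> (DF has_derivative (\<lambda>h. D2F y *v h)) (at y within simplexS)"
    and c2: "continuous_on simplexS D2F"
begin

definition rem :: "real^'d \<Rightarrow> real^'d \<Rightarrow> real" where
  "rem x y = F y - F x - DF x \<bullet> (y - x) - (1/2) * ((y - x) \<bullet> (D2F x *v (y - x)))"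

lemma taylor_bound:
  assumes x: "x \<in> simplexS" and y: "y \<in> simplexS"
    and eta: "\<And>z. z \<in> simplexS \<Longrightarrow> norm (z - x) \<le> norm (y - x) \<Longrightarrow> norm (D2F z - D2F x) \<le> \<eta>"
  shows "\<bar>rem x y\<bar> \<le> (real CARD('d))^2 * \<eta> * (norm (y - x))^2"
proof -
  define h where "h = y - x"
  define p where "p t = x + t *\<^sub>R h" for t :: real
  define B where "B = (real CARD('d))^2 * \<eta> * (norm h)^2"
  have pS: "p t \<in> simplexS" if "t \<in> {0..1}" for t
  proof -
    have "p t = (1 - t) *\<^sub>R x + t *\<^sub>R y" unfolding p_def h_def by (simp add: algebra_simps)
    then show ?thesis using that convex_simplexS x y unfolding convex_def by auto
  qed
  have B0: "0 \<le> B" using eta[OF x] by (simp add: B_def)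
  have pimg: "p ` {0..1} \<subseteq> simplexS" using pS by auto
  have pd: "(p has_derivative (\<lambda>s. s *\<^sub>R h)) (at t within {0..1})" for t
    unfolding p_def by (auto intro!: derivative_eq_intros)
  define g1 where "g1 t = DF (p t) \<bullet> h" for t
  define g2 where "g2 t = h \<bullet> (D2F (p t) *v h)" for t
  have gd: "((\<lambda>t. F (p t)) has_derivative (\<lambda>s. s * g1 t)) (at t within {0..1})" if "t \<in> {0..1}" for t
    using has_derivative_in_compose2[OF d1 pimg that pd] unfolding g1_def by (simp add: mult.commute)
  have g1d: "(g1 has_derivative (\<lambda>s. s * g2 t)) (at t within {0..1})" if "t \<in> {0..1}" for t
  proof -
    have "((\<lambda>t. DF (p t)) has_derivative (\<lambda>s. D2F (p t) *v (s *\<^sub>R h))) (at t within {0..1})"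
      by (rule has_derivative_in_compose2[OF d2 pimg that pd])
    then have "((\<lambda>t. DF (p t) \<bullet> h) has_derivative (\<lambda>s. (D2F (p t) *v (s *\<^sub>R h)) \<bullet> h)) (at t within {0..1})"
      by (intro derivative_eq_intros) auto
    then show ?thesis unfolding g1_def g2_def
      by (simp add: matrix_vector_mult_scaleR inner_commute)
  qed
  have g2b: "\<bar>g2 t - g2 0\<bar> \<le> B" if "t \<in> {0..1}" for t
  proof -
    have "g2 t - g2 0 = h \<bullet> ((D2F (p t) - D2F x) *v h)"
      unfolding g2_def p_def by (simp add: matrix_vector_mult_diff_rdistrib inner_diff_right)
    also have "\<bar>\<dots>\<bar> \<le> (real CARD('d))^2 * norm (D2F (p t) - D2F x) * (norm h)^2" by (rule quad_bound)
    also have "\<dots> \<le> B" unfolding B_def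
    proof (intro mult_right_mono mult_left_mono eta pS that)
      show "norm (p t - x) \<le> norm (y - x)" using that unfolding p_def h_def by (simp add: mult_left_le_one_le)
    qed auto
    finally show ?thesis .
  qed
  define phi1 where "phi1 t = g1 t - g1 0 - t * g2 0" for t
  have phi1d: "(phi1 has_derivative (\<lambda>s. s * (g2 t - g2 0))) (at t within {0..1})" if "t \<in> {0..1}" for t
    unfolding phi1_def using g1d[OF that] by (auto intro!: derivative_eq_intros simp: algebra_simps)
  have phi1b: "\<bar>phi1 t\<bar> \<le> B" if t: "t \<in> {0..1}" for t
  proof -
    have "norm (phi1 t - phi1 0) \<le> B * norm (t - 0)"
    proof (rule differentiable_bound[OF convex_real_interval(5) phi1d _ t])
      fix s :: real assume s: "s \<in> {0..1}"
      show "onorm (\<lambda>u. u * (g2 s - g2 0)) \<le> B"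
        by (rule onorm_mult_le[OF g2b[OF s]])
    qed auto
    moreover have "B * t \<le> B" using B0 t by (simp add: mult_right_le_one_le)
    ultimately show ?thesis using t by (simp add: phi1_def)
  qed
  define phi where "phi t = F (p t) - F (p 0) - t * g1 0 - t^2 / 2 * g2 0" for t
  have phid: "(phi has_derivative (\<lambda>s. s * phi1 t)) (at t within {0..1})" if "t \<in> {0..1}" for t
    unfolding phi_def phi1_def using gd[OF that]
    by (auto intro!: derivative_eq_intros simp: algebra_simps power2_eq_square)
  have "norm (phi 1 - phi 0) \<le> B * norm (1 - 0 :: real)"
  proof (rule differentiable_bound[OF convex_real_interval(5) phid])
    fix s :: real assume s: "s \<in> {0..1}"
    show "onorm (\<lambda>u. u * phi1 s) \<le> B"
      by (rule onorm_mult_le[OF phi1b[OF s]])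
  qed auto
  moreover have "phi 1 - phi 0 = rem x y"
    unfolding phi_def rem_def p_def g1_def g2_def h_def by simp
  ultimately show ?thesis unfolding B_def h_def by simp
qed

end


lemma bias_limit:
  fixes F :: "real^'d::finite \<Rightarrow> real" and DF D2F and x :: "real^'d"
  assumes T: "tay F DF D2F" and X: "bxs x"
  shows "(\<lambda>m. real m * (bernstein F m x - F x)) \<longlonglongrightarrow>
     (1/2) * (\<Sum>i\<in>UNIV. \<Sum>j\<in>UNIV. ((if i = j then x $ i else 0) - x $ i * x $ j) * D2F x $ i $ j)"
proof -
  interpret tay F DF D2F by (rule T)
  interpret bxs x by (rule X)
  define Bx where "Bx = (1/2) * (\<Sum>i\<in>UNIV. \<Sum>j\<in>UNIV. ((if i = j then x $ i else 0) - x $ i * x $ j) * D2F x $ i $ j)"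
  let ?n = "real CARD('d)"
  have n0: "?n > 0" by simp
  have "compact (D2F ` simplexS)" by (rule compact_continuous_image[OF c2 compact_simplexS])
  then obtain Kb where Kb: "\<And>z::real^'d. z \<in> simplexS \<Longrightarrow> norm (D2F z) \<le> Kb"
    using compact_imp_bounded bounded_iff by (metis imageI)
  have Cb: "\<bar>rem x y\<bar> \<le> (?n^2 * (2 * Kb)) * (norm (y - x))^2" if y: "y \<in> simplexS" for y :: "real^'d"
  proof -
    have "\<bar>rem x y\<bar> \<le> ?n^2 * (2 * Kb) * (norm (y - x))^2"
    proof (rule taylor_bound[OF x_in_S y])
      fix z :: "real^'d" assume z: "z \<in> simplexS"
      have "norm (D2F z - D2F x) \<le> norm (D2F z) + norm (D2F x)" by (rule norm_triangle_ineq4)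
      also have "\<dots> \<le> 2 * Kb" using Kb[OF z] Kb[OF x_in_S] by simp
      finally show "norm (D2F z - D2F x) \<le> 2 * Kb" .
    qed
    then show ?thesis by simp
  qed
  have loc: "\<exists>d>0. \<forall>y\<in>simplexS. norm (y - x) < d \<longrightarrow> \<bar>rem x y\<bar> \<le> e * (norm (y - x))^2" if e: "e > 0" for e
  proof -
    obtain d where d: "d > 0" "\<And>z::real^'d. z \<in> simplexS \<Longrightarrow> dist z x < d \<Longrightarrow> dist (D2F z) (D2F x) < e / ?n^2"
      using c2 x_in_S e n0 unfolding continuous_on_iff by (metis divide_pos_pos zero_less_power)
    have "\<bar>rem x y\<bar> \<le> e * (norm (y - x))^2" if y: "y \<in> simplexS" "norm (y - x) < d" for y :: "real^'d"
    proof -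
      have "\<bar>rem x y\<bar> \<le> ?n^2 * (e / ?n^2) * (norm (y - x))^2"
      proof (rule taylor_bound[OF x_in_S y(1)])
        fix z :: "real^'d" assume z: "z \<in> simplexS" "norm (z - x) \<le> norm (y - x)"
        then have "dist z x < d" using y(2) by (simp add: dist_norm)
        then show "norm (D2F z - D2F x) \<le> e / ?n^2" using d(2)[OF z(1)] by (simp add: dist_norm)
      qed
      then show ?thesis using n0 by simp
    qed
    then show ?thesis using d(1) by blast
  qed
  have remlim: "(\<lambda>m. real m * Ebern m (\<lambda>k. \<bar>rem x (kv m k)\<bar>) x) \<longlonglongrightarrow> 0"
    by (rule bern_rem[OF Cb loc]) auto
  have remlim2: "(\<lambda>m. real m * Ebern m (\<lambda>k. rem x (kv m k)) x) \<longlonglongrightarrow> 0"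
  proof (rule Lim_null_comparison[OF _ remlim])
    show "\<forall>\<^sub>F m in sequentially. norm (real m * Ebern m (\<lambda>k. rem x (kv m k)) x) \<le> real m * Ebern m (\<lambda>k. \<bar>rem x (kv m k)\<bar>) x"
      using Ebern_abs by (auto simp: abs_mult intro!: always_eventually mult_left_mono)
  qed
  have eq: "real m * (bernstein F m x - F x) = Bx + real m * Ebern m (\<lambda>k. rem x (kv m k)) x" if m: "m > 0" for m
  proof -
    have split: "F (kv m k) - F x = (\<Sum>i\<in>UNIV. DF x $ i * (kv m k - x) $ i)
        + (1/2) * (\<Sum>i\<in>UNIV. \<Sum>j\<in>UNIV. D2F x $ i $ j * ((kv m k - x) $ i * (kv m k - x) $ j))
        + rem x (kv m k)" for k
      unfolding rem_def by (simp add: inner_vec_def matrix_vector_mult_def sum_distrib_left mult_ac)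
    have "bernstein F m x - F x = Ebern m (\<lambda>k. F (kv m k) - F x) x"
      by (simp add: bernstein_Ebern Ebern_diff Ebern_const)
    also have "\<dots> = (\<Sum>i\<in>UNIV. DF x $ i * Ebern m (\<lambda>k. (kv m k - x) $ i) x)
        + (1/2) * (\<Sum>i\<in>UNIV. \<Sum>j\<in>UNIV. D2F x $ i $ j * Ebern m (\<lambda>k. (kv m k - x) $ i * (kv m k - x) $ j) x)
        + Ebern m (\<lambda>k. rem x (kv m k)) x"
      unfolding split by (simp only: Ebern_add Ebern_sum Ebern_cmult)
    also have "\<dots> = (1/2) * (\<Sum>i\<in>UNIV. \<Sum>j\<in>UNIV. D2F x $ i $ j * (((if i = j then x $ i else 0) - x $ i * x $ j) / real m))
        + Ebern m (\<lambda>k. rem x (kv m k)) x"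
      by (simp only: H1[OF m] H2[OF m]) simp
    also have "(1/2) * (\<Sum>i\<in>UNIV. \<Sum>j\<in>UNIV. D2F x $ i $ j * (((if i = j then x $ i else 0) - x $ i * x $ j) / real m))
        = Bx / real m"
      unfolding Bx_def by (simp add: sum_divide_distrib mult_ac)
    finally show ?thesis using m by (simp add: field_simps)
  qed
  have "(\<lambda>m. Bx + real m * Ebern m (\<lambda>k. rem x (kv m k)) x) \<longlonglongrightarrow> Bx + 0"
    by (intro tendsto_add tendsto_const remlim2)
  then have lim: "(\<lambda>m. Bx + real m * Ebern m (\<lambda>k. rem x (kv m k)) x) \<longlonglongrightarrow> Bx" by simp
  have ev: "\<forall>\<^sub>F m in sequentially. Bx + real m * Ebern m (\<lambda>k. rem x (kv m k)) x = real m * (bernstein F m x - F x)"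
    unfolding eventually_sequentially using eq by (intro exI[of _ 1]) auto
  have "(\<lambda>m. real m * (bernstein F m x - F x)) \<longlonglongrightarrow> Bx"
    by (rule Lim_transform_eventually[OF lim ev])
  then show ?thesis unfolding Bx_def .
qed


lemma Phi_cont: "isCont (cdf std_normal_distribution) t"
proof -
  have "measure std_normal_distribution {t} = 0"
  proof -
    have "{t} \<in> null_sets (density lborel (\<lambda>x. ennreal (std_normal_density x)))"
    proof (subst null_sets_density_iff)
      have "AE x in lborel. x \<in> {t} \<longrightarrow> ennreal (std_normal_density x) = 0"
        by (rule AE_mp[OF AE_lborel_singleton[of t]]) auto
      then show "{t} \<in> sets lborel \<and> (AE x in lborel. x \<in> {t} \<longrightarrow> ennreal (std_normal_density x) = 0)" by simp
    qed simp
    then show ?thesis by (simp add: measure_def emeasure_eq_0 null_setsD1)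
  qed
  then show ?thesis using finite_borel_measure.isCont_cdf[OF real_distribution.finite_borel_measure_M[OF real_dist_normal_dist]] by simp
qed

lemma normal_distr_cdf:
  assumes v: "v > 0"
  shows "cdf (normal_distr mu v) t = cdf std_normal_distribution ((t - mu) / sqrt v)"
proof -
  interpret S: prob_space std_normal_distribution
    using real_dist_normal_dist real_distribution_def by blast
  have d0: "distributed std_normal_distribution lborel (\<lambda>x. x) (\<lambda>x. ennreal (normal_density 0 1 x))"
    unfolding distributed_def
    by (auto simp: distr_id2 density_cong)
  have "distributed std_normal_distribution lborel (\<lambda>x. mu + sqrt v * x) (normal_density (mu + sqrt v * 0) (\<bar>sqrt v\<bar> * 1))"
    by (rule S.normal_density_affine[OF d0]) (use v in auto)
  then have dd: "distr std_normal_distribution lborel (\<lambda>x. mu + sqrt v * x) = normal_distr mu v"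
    using v unfolding distributed_def normal_distr_def by simp
  have m: "(\<lambda>x. mu + sqrt v * x) \<in> measurable std_normal_distribution lborel" by simp
  have "cdf (normal_distr mu v) t = measure std_normal_distribution ((\<lambda>x. mu + sqrt v * x) -` {..t} \<inter> space std_normal_distribution)"
    unfolding cdf_def dd[symmetric] by (rule measure_distr[OF m]) simp
  also have "(\<lambda>x. mu + sqrt v * x) -` {..t} \<inter> space std_normal_distribution = {..(t - mu) / sqrt v}"
    using v by (auto simp: field_simps)
  finally show ?thesis by (simp add: cdf_def)
qed

context prob_space begin

lemma slutsky:
  fixes A V :: "nat \<Rightarrow> 'a \<Rightarrow> real" and c :: "nat \<Rightarrow> real" and G :: "real \<Rightarrow> real"
  assumes A: "\<And>t. (\<lambda>n. prob {\<omega>\<in>space M. A n \<omega> \<le> t}) \<longlonglongrightarrow> G t"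
    and Gc: "\<And>t. isCont G t"
    and R: "\<And>e. e > 0 \<Longrightarrow> (\<lambda>n. prob {\<omega>\<in>space M. e \<le> \<bar>V n \<omega> - A n \<omega> - c n\<bar>}) \<longlonglongrightarrow> 0"
    and c: "c \<longlonglongrightarrow> c0"
    and mA: "\<And>n. A n \<in> borel_measurable M" and mV: "\<And>n. V n \<in> borel_measurable M"
  shows "(\<lambda>n. prob {\<omega>\<in>space M. V n \<omega> \<le> t}) \<longlonglongrightarrow> G (t - c0)"
proof (rule LIMSEQ_I)
  fix e :: real assume e: "e > 0"
  let ?s = "t - c0"
  obtain d where d: "d > 0" "\<And>y. \<bar>y - ?s\<bar> < d \<Longrightarrow> \<bar>G y - G ?s\<bar> < e / 2"
    using Gc[of ?s, unfolded continuous_at_eps_delta] e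
    by (metis dist_real_def half_gt_zero)
  define d3 where "d3 = d / 3"
  have d3: "d3 > 0" unfolding d3_def using d by simp
  have Gu: "\<bar>G (?s + 2 * d3) - G ?s\<bar> < e / 2" "\<bar>G (?s - 2 * d3) - G ?s\<bar> < e / 2"
    using d d3 unfolding d3_def by (intro d(2); simp)+
  have ev1: "\<forall>\<^sub>F n in sequentially. \<bar>prob {\<omega>\<in>space M. A n \<omega> \<le> ?s + 2 * d3} - G (?s + 2 * d3)\<bar> < e / 4"
    using A[of "?s + 2 * d3", unfolded tendsto_iff, rule_format, of "e/4"] e by (auto simp: dist_real_def)
  have ev2: "\<forall>\<^sub>F n in sequentially. \<bar>prob {\<omega>\<in>space M. A n \<omega> \<le> ?s - 2 * d3} - G (?s - 2 * d3)\<bar> < e / 4"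
    using A[of "?s - 2 * d3", unfolded tendsto_iff, rule_format, of "e/4"] e by (auto simp: dist_real_def)
  have ev3: "\<forall>\<^sub>F n in sequentially. \<bar>prob {\<omega>\<in>space M. d3 \<le> \<bar>V n \<omega> - A n \<omega> - c n\<bar>} - 0\<bar> < e / 4"
    using R[OF d3, unfolded tendsto_iff, rule_format, of "e/4"] e by (auto simp: dist_real_def)
  have ev4: "\<forall>\<^sub>F n in sequentially. \<bar>c n - c0\<bar> < d3"
    using c[unfolded tendsto_iff, rule_format, of d3] d3 by (auto simp: dist_real_def)
  have "\<forall>\<^sub>F n in sequentially. norm (prob {\<omega>\<in>space M. V n \<omega> \<le> t} - G ?s) < e"
    using ev1 ev2 ev3 ev4
  proof eventually_elim
    case (elim n)
    let ?V = "{\<omega>\<in>space M. V n \<omega> \<le> t}"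
    let ?Au = "{\<omega>\<in>space M. A n \<omega> \<le> ?s + 2 * d3}"
    let ?Al = "{\<omega>\<in>space M. A n \<omega> \<le> ?s - 2 * d3}"
    let ?R = "{\<omega>\<in>space M. d3 \<le> \<bar>V n \<omega> - A n \<omega> - c n\<bar>}"
    have [measurable]: "A n \<in> borel_measurable M" "V n \<in> borel_measurable M" using mA mV by auto
    have ev: "?V \<in> events" "?Au \<in> events" "?Al \<in> events" "?R \<in> events" by measurable
    have s1: "?V \<subseteq> ?Au \<union> ?R" using elim(4) by auto
    have s2: "?Al \<subseteq> ?V \<union> ?R" using elim(4) by auto
    have "prob ?V \<le> prob (?Au \<union> ?R)" using ev s1 by (intro finite_measure_mono) auto
    also have "\<dots> \<le> prob ?Au + prob ?R" using ev by (intro measure_subadditive) auto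
    finally have up: "prob ?V \<le> prob ?Au + prob ?R" .
    have "prob ?Al \<le> prob (?V \<union> ?R)" using ev s2 by (intro finite_measure_mono) auto
    also have "\<dots> \<le> prob ?V + prob ?R" using ev by (intro measure_subadditive) auto
    finally have lo: "prob ?Al \<le> prob ?V + prob ?R" .
    have R0: "0 \<le> prob ?R" by simp
    have e1: "prob ?Au < G (?s + 2 * d3) + e / 4" using elim(1) by (simp only: abs_less_iff) linarith
    have e2: "G (?s - 2 * d3) - e / 4 < prob ?Al" using elim(2) by (simp only: abs_less_iff) linarith
    have e3: "prob ?R < e / 4" using elim(3) by simp
    have g1: "G (?s + 2 * d3) < G ?s + e / 2" "G ?s - e / 2 < G (?s - 2 * d3)" using Gu by (simp_all only: abs_less_iff) linarith+
    have "prob ?V < G ?s + e" "G ?s - e < prob ?V" using up lo e1 e2 e3 g1 R0 by linarith+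
    then show ?case by (simp only: real_norm_def abs_less_iff) linarith
  qed
  then show "\<exists>no. \<forall>n\<ge>no. norm (prob {\<omega>\<in>space M. V n \<omega> \<le> t} - G ?s) < e"
    by (simp add: eventually_sequentially)
qed

end


definition ind :: "real^'d::finite \<Rightarrow> real^'d \<Rightarrow> real" where
  "ind a y = (if \<forall>j. y $ j \<le> a $ j then 1 else 0)"

definition boxle :: "real^'d::finite \<Rightarrow> (real^'d) set" where
  "boxle a = {y. \<forall>j. y $ j \<le> a $ j}"

lemma ind_indicator: "ind a = indicator (boxle a)"
  by (auto simp: ind_def boxle_def indicator_def)

lemma boxle_closed: "closed (boxle a)"
  unfolding boxle_def by (intro closed_Collect_all closed_Collect_le continuous_intros)

lemma boxle_sets[measurable]: "boxle a \<in> sets borel"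
  using boxle_closed by (rule borel_closed)

lemma ind_measurable[measurable]: "ind a \<in> borel_measurable borel"
  unfolding ind_indicator by measurable

lemma ind_01: "0 \<le> ind a y" "ind a y \<le> 1"
  by (auto simp: ind_def)

definition phi :: "nat \<Rightarrow> real^'d::finite \<Rightarrow> real^'d \<Rightarrow> real" where
  "phi m x y = Ebern m (\<lambda>k. ind (kv m k) y) x"

lemma phi_measurable[measurable]: "phi m x \<in> borel_measurable borel"
  unfolding phi_def Ebern_def by measurable

lemma bernstein_ecdf: "bernstein (ecdf X n \<omega>) m x = (\<Sum>i<n. phi m x (X i \<omega>)) / real n"
proof -
  have "bernstein (ecdf X n \<omega>) m x = Ebern m (\<lambda>k. (\<Sum>i<n. ind (kv m k) (X i \<omega>)) / real n) x"
    unfolding bernstein_Ebern ecdf_def ind_def by simp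
  also have "\<dots> = Ebern m (\<lambda>k. (1 / real n) * (\<Sum>i<n. ind (kv m k) (X i \<omega>))) x" by simp
  also have "\<dots> = (1 / real n) * (\<Sum>i<n. phi m x (X i \<omega>))"
    unfolding Ebern_cmult Ebern_sum phi_def ..
  finally show ?thesis by simp
qed

lemma mcdf_integral:
  assumes "prob_space \<mu>" "sets \<mu> = sets borel"
  shows "mcdf \<mu> a = integral\<^sup>L \<mu> (ind a)"
proof -
  interpret prob_space \<mu> by fact
  have "boxle a \<in> sets \<mu>" using assms(2) by simp
  then show ?thesis unfolding ind_indicator mcdf_def boxle_def[symmetric]
    by (simp add: integral_indicator emeasure_eq_measure)
qed

context bxs begin

lemma phi_01: "0 \<le> phi m x y" "phi m x y \<le> 1"
proof -
  show "0 \<le> phi m x y" unfolding phi_def by (rule Ebern_nonneg) (simp add: ind_01)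
  have "phi m x y \<le> Ebern m (\<lambda>k. 1) x" unfolding phi_def by (rule Ebern_mono) (simp add: ind_01)
  then show "phi m x y \<le> 1" using M0 by simp
qed

end

lemma bernstein_integral:
  assumes "prob_space \<mu>" "sets \<mu> = sets borel" "F = mcdf \<mu>"
  shows "bernstein F m x = integral\<^sup>L \<mu> (phi m x)"
proof -
  interpret prob_space \<mu> by fact
  have int: "integrable \<mu> (ind a)" for a
    by (rule integrable_const_bound[where B=1]) (auto simp: ind_def measurable_cong_sets[OF assms(2) refl])
  have "integral\<^sup>L \<mu> (phi m x) = (\<Sum>k\<in>multi_idx m. integral\<^sup>L \<mu> (ind (kv m k)) * bern_P k m x)"
    unfolding phi_def Ebern_def
    by (subst Bochner_Integration.integral_sum) (auto intro!: int integrable_mult_left integrable_mult_right)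
  also have "\<dots> = bernstein F m x"
    unfolding bernstein_Ebern Ebern_def assms(3) mcdf_integral[OF assms(1,2)] ..
  finally show ?thesis by simp
qed


context prob_space begin

lemma markov_sq:
  assumes [measurable]: "R \<in> borel_measurable M" and b: "\<And>\<omega>. \<bar>R \<omega>\<bar> \<le> B" and e: "e > 0"
  shows "prob {\<omega>\<in>space M. e \<le> \<bar>R \<omega>\<bar>} \<le> expectation (\<lambda>\<omega>. (R \<omega>)^2) / e^2"
proof -
  have int: "integrable M (\<lambda>\<omega>. (R \<omega>)^2)"
  proof (rule integrable_const_bound[where B="B^2"])
    have "(R \<omega>)^2 \<le> B^2" for \<omega>
    proof -
      have "\<bar>R \<omega>\<bar>^2 \<le> B^2" using b[of \<omega>] by (intro power_mono) auto
      then show ?thesis by simp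
    qed
    then show "AE \<omega> in M. norm ((R \<omega>)^2) \<le> B^2" by simp
  qed simp
  have "{\<omega>\<in>space M. e \<le> \<bar>R \<omega>\<bar>} = {\<omega>\<in>space M. e^2 \<le> (R \<omega>)^2}"
    using e by (auto simp: abs_le_square_iff[symmetric] abs_of_pos)
  also have "prob \<dots> \<le> expectation (\<lambda>\<omega>. (R \<omega>)^2) / e^2"
    by (rule integral_Markov_inequality_measure[OF int, where A="space M"]) (use e in auto)
  finally show ?thesis .
qed

lemma sum_sq_indep:
  fixes X :: "nat \<Rightarrow> 'a \<Rightarrow> 'b::topological_space" and g :: "'b \<Rightarrow> real"
  assumes indep: "indep_vars (\<lambda>_. borel) X UNIV"
    and distrX: "\<And>i. distr M borel (X i) = \<mu>"
    and g[measurable]: "g \<in> borel_measurable borel" and bnd: "\<And>y. \<bar>g y\<bar> \<le> B"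
    and mean0: "integral\<^sup>L \<mu> g = 0"
  shows "expectation (\<lambda>\<omega>. (\<Sum>i<n. g (X i \<omega>))^2) = real n * integral\<^sup>L \<mu> (\<lambda>y. (g y)^2)"
proof -
  have Xm[measurable]: "X i \<in> borel_measurable M" for i
    using indep unfolding indep_vars_def by auto
  define W where "W i \<omega> = g (X i \<omega>)" for i \<omega>
  have Wm[measurable]: "W i \<in> borel_measurable M" for i unfolding W_def by measurable
  have Wind: "indep_vars (\<lambda>_. borel) W UNIV"
    unfolding W_def by (rule indep_vars_compose2[OF indep]) simp
  have Wb: "\<bar>W i \<omega>\<bar> \<le> B" for i \<omega> unfolding W_def by (rule bnd)
  have B0: "0 \<le> B" using bnd[of undefined] by linarith
  have Wint: "integrable M (W i)" for i
    by (rule integrable_const_bound[where B=B]) (auto simp: Wb)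
  have Wint2: "integrable M (\<lambda>\<omega>. W i \<omega> * W j \<omega>)" for i j
  proof (rule integrable_const_bound[where B="B*B"])
    show "AE \<omega> in M. norm (W i \<omega> * W j \<omega>) \<le> B * B"
      using Wb B0 by (auto simp: abs_mult intro!: mult_mono)
  qed simp
  have EW: "expectation (W i) = 0" for i
  proof -
    have "expectation (W i) = integral\<^sup>L (distr M borel (X i)) g"
      unfolding W_def by (subst integral_distr) auto
    then show ?thesis using distrX mean0 by simp
  qed
  have EW2: "expectation (\<lambda>\<omega>. W i \<omega> * W i \<omega>) = integral\<^sup>L \<mu> (\<lambda>y. (g y)^2)" for i
  proof -
    have "expectation (\<lambda>\<omega>. W i \<omega> * W i \<omega>) = integral\<^sup>L (distr M borel (X i)) (\<lambda>y. (g y)^2)"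
      unfolding W_def by (subst integral_distr) (auto simp: power2_eq_square)
    then show ?thesis using distrX by simp
  qed
  have EWij: "expectation (\<lambda>\<omega>. W i \<omega> * W j \<omega>) = 0" if ij: "i \<noteq> j" for i j
  proof -
    have ind2: "indep_vars (\<lambda>_. borel) W {i, j}" by (rule indep_vars_subset[OF Wind]) auto
    have "expectation (\<lambda>\<omega>. \<Prod>l\<in>{i,j}. W l \<omega>) = (\<Prod>l\<in>{i,j}. expectation (W l))"
      by (rule indep_vars_lebesgue_integral[OF _ ind2]) (auto intro: Wint)
    then show ?thesis using ij EW by simp
  qed
  have "expectation (\<lambda>\<omega>. (\<Sum>i<n. g (X i \<omega>))^2) = expectation (\<lambda>\<omega>. \<Sum>i<n. \<Sum>j<n. W i \<omega> * W j \<omega>)"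
    unfolding W_def power2_eq_square sum_product ..
  also have "\<dots> = (\<Sum>i<n. \<Sum>j<n. expectation (\<lambda>\<omega>. W i \<omega> * W j \<omega>))"
    by (simp add: Bochner_Integration.integral_sum Wint2)
  also have "\<dots> = (\<Sum>i<n. \<Sum>j<n. if i = j then integral\<^sup>L \<mu> (\<lambda>y. (g y)^2) else 0)"
    by (intro sum.cong refl) (auto simp: EW2 EWij)
  also have "\<dots> = real n * integral\<^sup>L \<mu> (\<lambda>y. (g y)^2)" by simp
  finally show ?thesis .
qed

end


definition minv :: "real^'d::finite \<Rightarrow> real^'d \<Rightarrow> real^'d" where
  "minv a b = (\<chi> j. min (a $ j) (b $ j))"

lemma ind_min: "ind a y * ind b y = ind (minv a b) y"
  by (auto simp: ind_def minv_def)

lemma abs_ind_diff: "\<bar>ind a y - ind b y\<bar> = ind a y + ind b y - 2 * ind (minv a b) y"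
  by (auto simp: ind_def minv_def)

lemma minv_in_S: "a \<in> simplexS \<Longrightarrow> b \<in> simplexS \<Longrightarrow> minv a b \<in> simplexS"
proof -
  assume a: "a \<in> simplexS" and b: "b \<in> simplexS"
  have c: "0 \<le> minv a b $ j" "minv a b $ j \<le> a $ j" for j using a b by (auto simp: simplexS_def minv_def)
  have "l1norm (minv a b) \<le> l1norm a"
    unfolding l1norm_def
    by (intro sum_mono) (simp add: abs_of_nonneg[OF c(1)] order_trans[OF c(2) abs_ge_self])
  then show ?thesis using a c unfolding simplexS_def by (auto intro: order_trans)
qed

lemma minv_norm: "norm (minv a x - x) \<le> norm (a - x)"
  by (rule norm_le_componentwise_cart) (auto simp: minv_def)

locale setting =
  fixes \<mu> :: "(real^'d::finite) measure" and F :: "real^'d \<Rightarrow> real" and DF D2F and x :: "real^'d"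
  assumes mu: "prob_space \<mu>" and mu_sets: "sets \<mu> = sets borel" and F_def: "F = mcdf \<mu>"
    and T: "tay F DF D2F" and X: "bxs x"
begin

sublocale prob_space \<mu> by (rule mu)
sublocale B: bxs x by (rule X)
sublocale T: tay F DF D2F by (rule T)

lemma F_int: "F a = integral\<^sup>L \<mu> (ind a)"
  unfolding F_def by (rule mcdf_integral[OF mu mu_sets])

lemma F_bound: "\<bar>F a\<bar> \<le> 1"
  unfolding F_def mcdf_def by simp

lemma ind_meas[measurable]: "ind a \<in> borel_measurable \<mu>"
  by (rule measurable_cong_sets[OF mu_sets refl, THEN eqset_imp_iff, THEN iffD2]) (rule ind_measurable)

lemma ind_int: "integrable \<mu> (ind a)"
  by (rule integrable_const_bound[where B=1]) (auto simp: ind_def)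

definition psi where "psi m y = phi m x y - ind x y"

lemma psi_meas[measurable]: "psi m \<in> borel_measurable borel"
  unfolding psi_def by measurable

lemma psi_meas'[measurable]: "psi m \<in> borel_measurable \<mu>"
  by (rule measurable_cong_sets[OF mu_sets refl, THEN eqset_imp_iff, THEN iffD2]) (rule psi_meas)

lemma psi_bound: "\<bar>psi m y\<bar> \<le> 1"
  unfolding psi_def using B.phi_01[of m y] ind_01[of x y] by linarith

lemma psi_int: "integrable \<mu> (psi m)"
  by (rule integrable_const_bound[where B=1]) (auto simp: psi_bound)

definition q where "q a = F a + F x - 2 * F (minv a x)"

lemma int_abs_ind: "integral\<^sup>L \<mu> (\<lambda>y. \<bar>ind a y - ind x y\<bar>) = q a"
  unfolding abs_ind_diff q_def F_int using ind_int
  by (simp add: Bochner_Integration.integral_diff Bochner_Integration.integral_add)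

lemma psi_le: "\<bar>psi m y\<bar> \<le> Ebern m (\<lambda>k. \<bar>ind (kv m k) y - ind x y\<bar>) x"
proof -
  have "psi m y = Ebern m (\<lambda>k. ind (kv m k) y - ind x y) x"
    unfolding psi_def phi_def by (simp add: Ebern_diff B.Ebern_const)
  then show ?thesis using B.Ebern_abs by simp
qed

lemma int_psi_le: "integral\<^sup>L \<mu> (\<lambda>y. \<bar>psi m y\<bar>) \<le> Ebern m (\<lambda>k. q (kv m k)) x"
proof -
  have i2: "integrable \<mu> (\<lambda>y. \<bar>ind a y - ind x y\<bar>)" for a
    by (intro integrable_abs Bochner_Integration.integrable_diff ind_int)
  have "integral\<^sup>L \<mu> (\<lambda>y. \<bar>psi m y\<bar>) \<le> integral\<^sup>L \<mu> (\<lambda>y. Ebern m (\<lambda>k. \<bar>ind (kv m k) y - ind x y\<bar>) x)"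
  proof (rule integral_mono)
    show "integrable \<mu> (\<lambda>y. \<bar>psi m y\<bar>)" by (intro integrable_abs psi_int)
    show "integrable \<mu> (\<lambda>y. Ebern m (\<lambda>k. \<bar>ind (kv m k) y - ind x y\<bar>) x)"
      unfolding Ebern_def by (intro Bochner_Integration.integrable_sum integrable_mult_left i2)
  qed (rule psi_le)
  also have "\<dots> = Ebern m (\<lambda>k. q (kv m k)) x"
    unfolding Ebern_def int_abs_ind[symmetric]
    by (subst Bochner_Integration.integral_sum) (auto intro!: integrable_mult_left i2)
  finally show ?thesis .
qed

lemma int_psi_lim: "(\<lambda>m. integral\<^sup>L \<mu> (\<lambda>y. \<bar>psi m y\<bar>)) \<longlonglongrightarrow> 0"
proof -
  have cF: "continuous_on simplexS F" by (rule has_derivative_continuous_on[OF T.d1])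
  have loc: "\<exists>d>0. \<forall>y\<in>simplexS. norm (y - x) < d \<longrightarrow> \<bar>q y\<bar> \<le> e" if e: "e > 0" for e
  proof -
    obtain d where d: "d > 0" "\<And>z. z \<in> simplexS \<Longrightarrow> dist z x < d \<Longrightarrow> dist (F z) (F x) < e / 3"
      using cF B.x_in_S e unfolding continuous_on_iff by (metis divide_pos_pos zero_less_numeral)
    have "\<bar>q y\<bar> \<le> e" if y: "y \<in> simplexS" "norm (y - x) < d" for y
    proof -
      have m: "minv y x \<in> simplexS" by (rule minv_in_S[OF y(1) B.x_in_S])
      have "norm (minv y x - x) < d" using minv_norm[of y x] y(2) by linarith
      then have a: "\<bar>F (minv y x) - F x\<bar> < e / 3" using d(2)[OF m] by (simp add: dist_norm)
      have b: "\<bar>F y - F x\<bar> < e / 3" using d(2)[OF y(1)] y(2) by (simp add: dist_norm)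
      show ?thesis unfolding q_def using a b by linarith
    qed
    then show ?thesis using d(1) by blast
  qed
  have bnd: "\<bar>q y\<bar> \<le> 4" for y unfolding q_def using F_bound[of y] F_bound[of x] F_bound[of "minv y x"] by linarith
  have lim: "(\<lambda>m. Ebern m (\<lambda>k. \<bar>q (kv m k)\<bar>) x) \<longlonglongrightarrow> 0"
    by (rule B.bern_conv0[OF _ loc]) (auto intro: bnd)
  show ?thesis
  proof (rule Lim_null_comparison[OF _ lim])
    show "\<forall>\<^sub>F m in sequentially. norm (integral\<^sup>L \<mu> (\<lambda>y. \<bar>psi m y\<bar>)) \<le> Ebern m (\<lambda>k. \<bar>q (kv m k)\<bar>) x"
    proof (intro always_eventually allI)
      fix m
      have "Ebern m (\<lambda>k. q (kv m k)) x \<le> Ebern m (\<lambda>k. \<bar>q (kv m k)\<bar>) x" by (rule B.Ebern_mono) simp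
      moreover have "0 \<le> integral\<^sup>L \<mu> (\<lambda>y. \<bar>psi m y\<bar>)" by simp
      ultimately show "norm (integral\<^sup>L \<mu> (\<lambda>y. \<bar>psi m y\<bar>)) \<le> Ebern m (\<lambda>k. \<bar>q (kv m k)\<bar>) x"
        using int_psi_le[of m] by simp
    qed
  qed
qed

lemma var_psi_le: "integral\<^sup>L \<mu> (\<lambda>y. (psi m y - integral\<^sup>L \<mu> (psi m))^2) \<le> integral\<^sup>L \<mu> (\<lambda>y. \<bar>psi m y\<bar>)"
proof -
  let ?c = "integral\<^sup>L \<mu> (psi m)"
  have i2: "integrable \<mu> (\<lambda>y. (psi m y)^2)"
    by (rule integrable_const_bound[where B=1]) (auto simp: abs_square_le_1 psi_bound)
  have "integral\<^sup>L \<mu> (\<lambda>y. (psi m y - ?c)^2) = integral\<^sup>L \<mu> (\<lambda>y. (psi m y)^2 - 2 * ?c * psi m y + ?c^2)"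
    by (intro Bochner_Integration.integral_cong refl) (simp add: power2_diff algebra_simps)
  also have "\<dots> = integral\<^sup>L \<mu> (\<lambda>y. (psi m y)^2) - 2 * ?c * ?c + ?c^2"
    using i2 psi_int by (simp add: Bochner_Integration.integral_diff Bochner_Integration.integral_add prob_space)
  also have "\<dots> \<le> integral\<^sup>L \<mu> (\<lambda>y. (psi m y)^2)" by (simp add: power2_eq_square)
  also have "\<dots> \<le> integral\<^sup>L \<mu> (\<lambda>y. \<bar>psi m y\<bar>)"
  proof (rule integral_mono[OF i2])
    show "integrable \<mu> (\<lambda>y. \<bar>psi m y\<bar>)" by (intro integrable_abs psi_int)
    fix y
    have "\<bar>psi m y\<bar> * \<bar>psi m y\<bar> \<le> \<bar>psi m y\<bar> * 1" using psi_bound[of m y] by (intro mult_left_mono) auto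
    then show "(psi m y)^2 \<le> \<bar>psi m y\<bar>" by (simp add: power2_eq_square abs_mult[symmetric])
  qed
  finally show ?thesis .
qed

end


lemma (in prob_space) cdf_distr_prob:
  assumes [measurable]: "Y \<in> borel_measurable M"
  shows "cdf (distr M borel Y) t = prob {\<omega>\<in>space M. Y \<omega> \<le> t}"
  unfolding cdf_def by (subst measure_distr) (auto intro!: arg_cong[where f=prob])

lemma clt_A:
  fixes M :: "'a measure" and X :: "nat \<Rightarrow> 'a \<Rightarrow> real^'d::finite"
  assumes M: "prob_space M" and X_indep: "prob_space.indep_vars M (\<lambda>_. borel) X UNIV"
    and X_distr: "\<And>i. distr M borel (X i) = \<mu>"
    and S: "setting \<mu> F DF D2F x"
    and Fx_pos: "0 < F x" and Fx_lt1: "F x < 1"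
  shows "(\<lambda>n. measure M {\<omega>\<in>space M. (\<Sum>i<n. ind x (X i \<omega>) - F x) / sqrt n \<le> t})
     \<longlonglongrightarrow> cdf std_normal_distribution (t / sqrt (F x * (1 - F x)))"
proof -
  interpret M: prob_space M by (rule M)
  interpret S: setting \<mu> F DF D2F x by (rule S)
  define \<sigma> where "\<sigma> = sqrt (F x * (1 - F x))"
  have s0: "\<sigma> > 0" unfolding \<sigma>_def using Fx_pos Fx_lt1 by simp
  have s2: "\<sigma>^2 = F x * (1 - F x)" unfolding \<sigma>_def using Fx_pos Fx_lt1 by simp
  have Xm[measurable]: "X i \<in> borel_measurable M" for i
    using X_indep unfolding M.indep_vars_def by auto
  define Xb where "Xb i \<omega> = ind x (X i \<omega>)" for i \<omega>
  have Xbm[measurable]: "Xb i \<in> borel_measurable M" for i unfolding Xb_def by measurable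
  have ind_sq: "(ind x y - F x)^2 = (1 - 2 * F x) * ind x y + (F x)^2" for y
    by (auto simp: ind_def power2_eq_square algebra_simps)
  have Eint: "M.expectation (\<lambda>\<omega>. f (X i \<omega>)) = integral\<^sup>L \<mu> f" if [measurable]: "f \<in> borel_measurable borel" for f :: "real^'d \<Rightarrow> real" and i :: nat
  proof -
    have "integral\<^sup>L (distr M borel (X i)) f = M.expectation (\<lambda>\<omega>. f (X i \<omega>))"
      by (subst integral_distr) auto
    then show ?thesis using X_distr by simp
  qed
  have clt: "weak_conv_m (\<lambda>n. distr M borel (\<lambda>\<omega>. (\<Sum>i<n. Xb i \<omega> - F x) / sqrt (n * \<sigma>^2))) std_normal_distribution"
  proof (rule M.central_limit_theorem[where \<mu>="distr \<mu> borel (ind x)"])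
    show "M.indep_vars (\<lambda>i. borel) Xb UNIV"
      unfolding Xb_def by (rule M.indep_vars_compose2[OF X_indep]) simp
    show "M.expectation (Xb n) = F x" for n
      unfolding Xb_def by (simp add: Eint S.F_int)
    show "\<sigma> > 0" by (rule s0)
    show "integrable M (\<lambda>\<omega>. (Xb n \<omega>)^2)" for n
      by (rule M.integrable_const_bound[where B=1]) (auto simp: Xb_def ind_def)
    show "M.variance (Xb n) = \<sigma>^2" for n
    proof -
      have "M.variance (Xb n) = M.expectation (\<lambda>\<omega>. (ind x (X n \<omega>) - F x)^2)"
        using \<open>M.expectation (Xb n) = F x\<close> unfolding Xb_def by simp
      also have "\<dots> = integral\<^sup>L \<mu> (\<lambda>y. (ind x y - F x)^2)" by (rule Eint) simp
      also have "\<dots> = integral\<^sup>L \<mu> (\<lambda>y. (1 - 2 * F x) * ind x y + (F x)^2)" unfolding ind_sq ..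
      also have "\<dots> = (1 - 2 * F x) * F x + (F x)^2"
        using S.ind_int by (simp add: Bochner_Integration.integral_add S.F_int S.prob_space)
      finally show ?thesis unfolding s2 by (simp add: power2_eq_square algebra_simps)
    qed
    show "distr M borel (Xb n) = distr \<mu> borel (ind x)" for n
    proof -
      have "distr M borel (Xb n) = distr M borel (ind x \<circ> X n)" unfolding Xb_def comp_def ..
      also have "\<dots> = distr (distr M borel (X n)) borel (ind x)" by (rule distr_distr[symmetric]) auto
      finally show ?thesis using X_distr by simp
    qed
  qed
  have "(\<lambda>n. cdf (distr M borel (\<lambda>\<omega>. (\<Sum>i<n. Xb i \<omega> - F x) / sqrt (n * \<sigma>^2))) (t / \<sigma>))
     \<longlonglongrightarrow> cdf std_normal_distribution (t / \<sigma>)"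
    using clt Phi_cont unfolding weak_conv_m_def weak_conv_def by blast
  moreover have "cdf (distr M borel (\<lambda>\<omega>. (\<Sum>i<n. Xb i \<omega> - F x) / sqrt (n * \<sigma>^2))) (t / \<sigma>)
      = measure M {\<omega>\<in>space M. (\<Sum>i<n. ind x (X i \<omega>) - F x) / sqrt n \<le> t}" for n
  proof -
    have "cdf (distr M borel (\<lambda>\<omega>. (\<Sum>i<n. Xb i \<omega> - F x) / sqrt (n * \<sigma>^2))) (t / \<sigma>)
       = M.prob {\<omega>\<in>space M. (\<Sum>i<n. Xb i \<omega> - F x) / sqrt (n * \<sigma>^2) \<le> t / \<sigma>}"
      by (rule M.cdf_distr_prob) measurable
    also have "{\<omega>\<in>space M. (\<Sum>i<n. Xb i \<omega> - F x) / sqrt (n * \<sigma>^2) \<le> t / \<sigma>}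
       = {\<omega>\<in>space M. (\<Sum>i<n. ind x (X i \<omega>) - F x) / sqrt n \<le> t}"
    proof -
      have "a / sqrt (n * \<sigma>^2) \<le> t / \<sigma> \<longleftrightarrow> a / sqrt n \<le> t" for a
      proof (cases "n = 0")
        case True then show ?thesis using s0 by (simp add: zero_le_divide_iff)
      next
        case False
        then have "sqrt (n * \<sigma>^2) = sqrt n * \<sigma>" using s0 by (simp add: real_sqrt_mult)
        then show ?thesis using s0 False by (simp add: divide_le_eq le_divide_eq field_simps)
      qed
      then show ?thesis unfolding Xb_def by auto
    qed
    finally show ?thesis .
  qed
  ultimately show ?thesis unfolding \<sigma>_def by simp
qed

lemma noise:
  fixes M :: "'a measure" and X :: "nat \<Rightarrow> 'a \<Rightarrow> real^'d::finite" and m :: "nat \<Rightarrow> nat"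
  assumes M: "prob_space M" and X_indep: "prob_space.indep_vars M (\<lambda>_. borel) X UNIV"
    and X_distr: "\<And>i. distr M borel (X i) = \<mu>"
    and S: "setting \<mu> F DF D2F x"
    and m_lim: "filterlim m at_top sequentially"
    and e: "e > 0"
  shows "(\<lambda>n. measure M {\<omega>\<in>space M. e \<le> \<bar>(\<Sum>i<n. (phi (m n) x (X i \<omega>) - ind x (X i \<omega>))
      - integral\<^sup>L \<mu> (\<lambda>y. phi (m n) x y - ind x y)) / sqrt n\<bar>}) \<longlonglongrightarrow> 0"
proof -
  interpret M: prob_space M by (rule M)
  interpret S: setting \<mu> F DF D2F x by (rule S)
  have Xm[measurable]: "X i \<in> borel_measurable M" for i
    using X_indep unfolding M.indep_vars_def by auto
  define C where "C k = integral\<^sup>L \<mu> (S.psi k)" for k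
  have psi_eq: "phi k x y - ind x y = S.psi k y" for k y unfolding S.psi_def ..
  have Cb: "\<bar>C k\<bar> \<le> 1" for k
  proof -
    have "\<bar>C k\<bar> \<le> integral\<^sup>L \<mu> (\<lambda>y. \<bar>S.psi k y\<bar>)" unfolding C_def by (rule integral_abs_bound)
    also have "\<dots> \<le> integral\<^sup>L \<mu> (\<lambda>y. 1)"
      by (intro integral_mono integrable_abs S.psi_int) (auto simp: S.psi_bound)
    finally show ?thesis by (simp add: S.prob_space)
  qed
  define R where "R n \<omega> = (\<Sum>i<n. S.psi (m n) (X i \<omega>) - C (m n)) / sqrt n" for n \<omega>
  have Rm[measurable]: "R n \<in> borel_measurable M" for n unfolding R_def by measurable
  have bound: "M.prob {\<omega>\<in>space M. e \<le> \<bar>R n \<omega>\<bar>} \<le> integral\<^sup>L \<mu> (\<lambda>y. \<bar>S.psi (m n) y\<bar>) / e^2" for n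
  proof -
    let ?g = "\<lambda>y. S.psi (m n) y - C (m n)"
    have gb: "\<bar>?g y\<bar> \<le> 2" for y using S.psi_bound[of "m n" y] Cb[of "m n"] by linarith
    have Sb: "\<bar>\<Sum>i<n. ?g (X i \<omega>)\<bar> \<le> 2 * real n" for \<omega>
    proof -
      have "\<bar>\<Sum>i<n. ?g (X i \<omega>)\<bar> \<le> (\<Sum>i<n. \<bar>?g (X i \<omega>)\<bar>)" by (rule sum_abs)
      also have "\<dots> \<le> (\<Sum>i<n. 2)" by (rule sum_mono) (rule gb)
      finally show ?thesis by simp
    qed
    have Rb: "\<bar>R n \<omega>\<bar> \<le> 2 * real n" for \<omega>
    proof (cases "n = 0")
      case True then show ?thesis by (simp add: R_def)
    next
      case False
      then have "1 \<le> sqrt (real n)" by simp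
      then have "\<bar>R n \<omega>\<bar> \<le> \<bar>\<Sum>i<n. ?g (X i \<omega>)\<bar>"
        unfolding R_def abs_divide using frac_le[of "\<bar>\<Sum>i<n. ?g (X i \<omega>)\<bar>" "\<bar>\<Sum>i<n. ?g (X i \<omega>)\<bar>" 1 "\<bar>sqrt (real n)\<bar>"] by simp
      then show ?thesis using Sb[of \<omega>] by linarith
    qed
    have g_mean: "integral\<^sup>L \<mu> ?g = 0"
      using S.psi_int by (simp add: Bochner_Integration.integral_diff S.prob_space C_def)
    have ER: "M.expectation (\<lambda>\<omega>. (R n \<omega>)^2) \<le> integral\<^sup>L \<mu> (\<lambda>y. (?g y)^2)"
    proof -
      have "M.expectation (\<lambda>\<omega>. (R n \<omega>)^2) = M.expectation (\<lambda>\<omega>. (\<Sum>i<n. ?g (X i \<omega>))^2) / real n"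
        unfolding R_def by (simp add: power_divide)
      also have "\<dots> = real n * integral\<^sup>L \<mu> (\<lambda>y. (?g y)^2) / real n"
        by (subst M.sum_sq_indep[OF X_indep X_distr _ gb g_mean]) auto
      also have "\<dots> \<le> integral\<^sup>L \<mu> (\<lambda>y. (?g y)^2)"
        by (cases "n = 0") auto
      finally show ?thesis .
    qed
    have "M.prob {\<omega>\<in>space M. e \<le> \<bar>R n \<omega>\<bar>} \<le> M.expectation (\<lambda>\<omega>. (R n \<omega>)^2) / e^2"
      by (rule M.markov_sq[OF Rm Rb e])
    also have "\<dots> \<le> integral\<^sup>L \<mu> (\<lambda>y. (?g y)^2) / e^2"
      using ER e by (intro divide_right_mono) auto
    also have "\<dots> \<le> integral\<^sup>L \<mu> (\<lambda>y. \<bar>S.psi (m n) y\<bar>) / e^2"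
      using S.var_psi_le[of "m n"] e unfolding C_def by (intro divide_right_mono) auto
    finally show ?thesis .
  qed
  have lim0: "(\<lambda>n. integral\<^sup>L \<mu> (\<lambda>y. \<bar>S.psi (m n) y\<bar>) / e^2) \<longlonglongrightarrow> 0 / e^2"
    by (intro tendsto_divide tendsto_const filterlim_compose[OF S.int_psi_lim m_lim]) (use e in auto)
  have "(\<lambda>n. M.prob {\<omega>\<in>space M. e \<le> \<bar>R n \<omega>\<bar>}) \<longlonglongrightarrow> 0"
    by (rule tendsto_sandwich[OF _ _ tendsto_const lim0[simplified]]) (auto intro: always_eventually bound)
  then show ?thesis unfolding R_def C_def psi_eq .
qed

lemma alg_id:
  fixes n :: nat and Sp SI C Fx :: real
  shows "sqrt n * (Sp / n - (C + Fx)) - (SI - n * Fx) / sqrt n = (Sp - SI - n * C) / sqrt n"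
proof (cases "n = 0")
  case True then show ?thesis by simp
next
  case False
  then have s: "sqrt (real n) > 0" by simp
  have "sqrt (real n) * sqrt (real n) = real n" by simp
  then show ?thesis using s False by (simp add: field_simps)
qed

lemma final_step:
  assumes M: "prob_space M" and Vm: "\<And>n. V n \<in> borel_measurable M"
    and lim: "\<And>t. (\<lambda>n. measure M {\<omega>\<in>space M. V n \<omega> \<le> t}) \<longlonglongrightarrow> cdf N t"
  shows "weak_conv_m (\<lambda>n. distr M borel (V n)) N"
  unfolding weak_conv_m_def weak_conv_def
  using prob_space.cdf_distr_prob[OF M Vm] lim by simp

theorem theorem3:
  fixes M :: "'a measure"
    and \<mu> :: "(real ^ 'd::finite) measure"
    and X :: "nat \<Rightarrow> 'a \<Rightarrow> real ^ 'd"
    and F :: "real ^ 'd \<Rightarrow> real"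
    and DF :: "real ^ 'd \<Rightarrow> real ^ 'd"
    and D2F :: "real ^ 'd \<Rightarrow> real ^ 'd ^ 'd"
    and m :: "nat \<Rightarrow> nat"
    and x :: "real ^ 'd"
  assumes M: "prob_space M"
    and mu_prob: "prob_space \<mu>"
    and mu_sets: "sets \<mu> = sets borel"
    and mu_supp: "emeasure \<mu> simplexS = 1"
    and F_def: "F = mcdf \<mu>"
    and F_diff1: "\<And>y. y \<in> simplexS \<Longrightarrow> (F has_derivative (\<lambda>h. DF y \<bullet> h)) (at y within simplexS)"
    and F_diff2: "\<And>y. y \<in> simplexS \<Longrightarrow> (DF has_derivative (\<lambda>h. D2F y *v h)) (at y within simplexS)"
    and F_cont2: "continuous_on simplexS D2F"
    and X_indep: "prob_space.indep_vars M (\<lambda>_. borel) X UNIV"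
    and X_distr: "\<And>i. distr M borel (X i) = \<mu>"
    and m_lim: "filterlim m at_top sequentially"
    and x_int: "x \<in> simplexInt"
    and Fx_pos: "0 < F x" and Fx_lt1: "F x < 1"
  shows
    "weak_conv_m
       (\<lambda>n. distr M borel (\<lambda>\<omega>. sqrt (real n) *
              (bernstein (ecdf X n \<omega>) (m n) x - bernstein F (m n) x)))
       (normal_distr 0 (F x * (1 - F x)))
     \<and>
     ((\<lambda>n. sqrt (real n) / real (m n)) \<longlonglongrightarrow> 0 \<longrightarrow>
      weak_conv_m
       (\<lambda>n. distr M borel (\<lambda>\<omega>. sqrt (real n) * (bernstein (ecdf X n \<omega>) (m n) x - F x)))
       (normal_distr 0 (F x * (1 - F x))))
     \<and>
     (\<forall>lam::real. lam > 0 \<longrightarrow> (\<lambda>n. sqrt (real n) / real (m n)) \<longlonglongrightarrow> lam \<longrightarrow>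
      weak_conv_m
       (\<lambda>n. distr M borel (\<lambda>\<omega>. sqrt (real n) * (bernstein (ecdf X n \<omega>) (m n) x - F x)))
       (normal_distr
          (lam * ((1/2) * (\<Sum>i\<in>UNIV. \<Sum>j\<in>UNIV.
              ((if i = j then x $ i else 0) - x $ i * x $ j) * D2F x $ i $ j)))
          (F x * (1 - F x))))"
proof -
  interpret M: prob_space M by (rule M)
  have X: "bxs x"
  proof -
    have xi: "0 < x $ i" "x $ i < 1" for i using x_int by (auto simp: simplexInt_def)
    have l1: "l1norm x = (\<Sum>i\<in>UNIV. x $ i)" unfolding l1norm_def using xi by (simp add: less_imp_le)
    show ?thesis
      by (unfold_locales) (use l1 xi x_int in \<open>auto simp: simplexInt_def less_imp_le\<close>)
  qed
  have T: "tay F DF D2F" by (rule tay.intro) (fact F_diff1 F_diff2 F_cont2)+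
  have S: "setting \<mu> F DF D2F x" by (rule setting.intro[OF mu_prob mu_sets F_def T X])
  interpret S: setting \<mu> F DF D2F x by (rule S)
  have Xm[measurable]: "X i \<in> borel_measurable M" for i
    using X_indep unfolding M.indep_vars_def by auto
  define \<sigma>2 where "\<sigma>2 = F x * (1 - F x)"
  have s0: "\<sigma>2 > 0" unfolding \<sigma>2_def using Fx_pos Fx_lt1 by simp
  define G where "G t = cdf std_normal_distribution (t / sqrt \<sigma>2)" for t
  have Gc: "isCont G t" for t
    unfolding G_def by (rule isCont_o2[where f="\<lambda>t. t / sqrt \<sigma>2", OF _ Phi_cont]) (intro continuous_intros, use s0 in simp)
  have Gn: "G (t - c0) = cdf (normal_distr c0 \<sigma>2) t" for t c0
    unfolding G_def normal_distr_cdf[OF s0] ..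
  define A where "A n \<omega> = (\<Sum>i<n. ind x (X i \<omega>) - F x) / sqrt n" for n \<omega>
  have Am[measurable]: "A n \<in> borel_measurable M" for n unfolding A_def by measurable
  have Alim: "(\<lambda>n. M.prob {\<omega>\<in>space M. A n \<omega> \<le> t}) \<longlonglongrightarrow> G t" for t
    unfolding A_def G_def \<sigma>2_def by (rule clt_A[OF M X_indep X_distr S Fx_pos Fx_lt1])
  define C where "C k = integral\<^sup>L \<mu> (\<lambda>y. phi k x y - ind x y)" for k
  define R where "R n \<omega> = (\<Sum>i<n. (phi (m n) x (X i \<omega>) - ind x (X i \<omega>)) - C (m n)) / sqrt n" for n \<omega>
  have Rlim: "(\<lambda>n. M.prob {\<omega>\<in>space M. e \<le> \<bar>R n \<omega>\<bar>}) \<longlonglongrightarrow> 0" if e: "e > 0" for e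
    unfolding R_def C_def by (rule noise[OF M X_indep X_distr S m_lim e])
  have bF: "bernstein F k x = C k + F x" for k
  proof -
    have pm: "phi k x \<in> borel_measurable \<mu>"
      by (rule measurable_cong_sets[OF mu_sets refl, THEN eqset_imp_iff, THEN iffD2]) (rule phi_measurable)
    have pint: "integrable \<mu> (phi k x)"
    proof (rule S.integrable_const_bound[where B=1])
      show "AE y in \<mu>. norm (phi k x y) \<le> 1" using S.B.phi_01[of k] by (auto simp: abs_le_iff)
    qed (rule pm)
    have "C k = integral\<^sup>L \<mu> (phi k x) - F x"
      unfolding C_def S.F_int using S.ind_int pint
      by (subst Bochner_Integration.integral_diff) auto
    then show ?thesis using bernstein_integral[OF mu_prob mu_sets F_def] by simp
  qed
  define V1 where "V1 n \<omega> = sqrt (real n) * (bernstein (ecdf X n \<omega>) (m n) x - bernstein F (m n) x)" for n \<omega>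
  define V2 where "V2 n \<omega> = sqrt (real n) * (bernstein (ecdf X n \<omega>) (m n) x - F x)" for n \<omega>
  define cn where "cn n = sqrt (real n) * (bernstein F (m n) x - F x)" for n
  have V1m[measurable]: "V1 n \<in> borel_measurable M" for n
    unfolding V1_def bernstein_ecdf by measurable
  have V2m[measurable]: "V2 n \<in> borel_measurable M" for n
    unfolding V2_def bernstein_ecdf by measurable
  have idR: "V1 n \<omega> - A n \<omega> - 0 = R n \<omega>" for n \<omega>
  proof -
    have "V1 n \<omega> - A n \<omega> = sqrt n * ((\<Sum>i<n. phi (m n) x (X i \<omega>)) / n - (C (m n) + F x))
        - ((\<Sum>i<n. ind x (X i \<omega>)) - n * F x) / sqrt n"
      unfolding V1_def A_def bernstein_ecdf bF by (simp add: sum_subtractf)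
    also have "\<dots> = ((\<Sum>i<n. phi (m n) x (X i \<omega>)) - (\<Sum>i<n. ind x (X i \<omega>)) - n * C (m n)) / sqrt n"
      by (rule alg_id)
    also have "\<dots> = R n \<omega>" unfolding R_def by (simp add: sum_subtractf)
    finally show ?thesis by simp
  qed
  have idR2: "V2 n \<omega> - A n \<omega> - cn n = R n \<omega>" for n \<omega>
    using idR[of n \<omega>] unfolding V1_def V2_def cn_def by (simp add: algebra_simps)
  have Rlim1: "(\<lambda>n. M.prob {\<omega>\<in>space M. e \<le> \<bar>V1 n \<omega> - A n \<omega> - 0\<bar>}) \<longlonglongrightarrow> 0" if "e > 0" for e
    unfolding idR using Rlim[OF that] .
  have Rlim2: "(\<lambda>n. M.prob {\<omega>\<in>space M. e \<le> \<bar>V2 n \<omega> - A n \<omega> - cn n\<bar>}) \<longlonglongrightarrow> 0" if "e > 0" for e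
    unfolding idR2 using Rlim[OF that] .
  define Bx where "Bx = (1/2) * (\<Sum>i\<in>UNIV. \<Sum>j\<in>UNIV. ((if i = j then x $ i else 0) - x $ i * x $ j) * D2F x $ i $ j)"
  have bias: "(\<lambda>n. real (m n) * (bernstein F (m n) x - F x)) \<longlonglongrightarrow> Bx"
    unfolding Bx_def by (rule filterlim_compose[OF bias_limit[OF T X] m_lim])
  have ev_m: "\<forall>\<^sub>F n in sequentially. 1 \<le> m n"
    using m_lim unfolding filterlim_at_top by blast
  have cn_lim: "cn \<longlonglongrightarrow> l * Bx" if sl: "(\<lambda>n. sqrt (real n) / real (m n)) \<longlonglongrightarrow> l" for l
  proof -
    have "(\<lambda>n. (sqrt (real n) / real (m n)) * (real (m n) * (bernstein F (m n) x - F x))) \<longlonglongrightarrow> l * Bx"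
      by (rule tendsto_mult[OF sl bias])
    moreover have "\<forall>\<^sub>F n in sequentially. (sqrt (real n) / real (m n)) * (real (m n) * (bernstein F (m n) x - F x)) = cn n"
      using ev_m by eventually_elim (simp add: cn_def)
    ultimately show ?thesis by (rule Lim_transform_eventually)
  qed
  have part1: "weak_conv_m (\<lambda>n. distr M borel (V1 n)) (normal_distr 0 \<sigma>2)"
  proof (rule final_step[OF M V1m])
    fix t
    have "(\<lambda>n. M.prob {\<omega>\<in>space M. V1 n \<omega> \<le> t}) \<longlonglongrightarrow> G (t - 0)"
      by (rule M.slutsky[OF Alim Gc Rlim1 tendsto_const Am V1m])
    then show "(\<lambda>n. M.prob {\<omega>\<in>space M. V1 n \<omega> \<le> t}) \<longlonglongrightarrow> cdf (normal_distr 0 \<sigma>2) t"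
      unfolding Gn .
  qed
  have part23: "weak_conv_m (\<lambda>n. distr M borel (V2 n)) (normal_distr (l * Bx) \<sigma>2)"
    if sl: "(\<lambda>n. sqrt (real n) / real (m n)) \<longlonglongrightarrow> l" for l
  proof (rule final_step[OF M V2m])
    fix t
    have "(\<lambda>n. M.prob {\<omega>\<in>space M. V2 n \<omega> \<le> t}) \<longlonglongrightarrow> G (t - l * Bx)"
      by (rule M.slutsky[OF Alim Gc Rlim2 cn_lim[OF sl] Am V2m])
    then show "(\<lambda>n. M.prob {\<omega>\<in>space M. V2 n \<omega> \<le> t}) \<longlonglongrightarrow> cdf (normal_distr (l * Bx) \<sigma>2) t"
      unfolding Gn .
  qed
  show ?thesis
  proof (intro conjI impI allI)
    show "weak_conv_m (\<lambda>n. distr M borel (\<lambda>\<omega>. sqrt (real n) *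
              (bernstein (ecdf X n \<omega>) (m n) x - bernstein F (m n) x))) (normal_distr 0 (F x * (1 - F x)))"
      using part1 unfolding V1_def \<sigma>2_def .
  next
    assume "(\<lambda>n. sqrt (real n) / real (m n)) \<longlonglongrightarrow> 0"
    from part23[OF this] show "weak_conv_m (\<lambda>n. distr M borel (\<lambda>\<omega>. sqrt (real n) * (bernstein (ecdf X n \<omega>) (m n) x - F x)))
       (normal_distr 0 (F x * (1 - F x)))"
      unfolding V2_def \<sigma>2_def by simp
  next
    fix lam :: real
    assume "lam > 0" "(\<lambda>n. sqrt (real n) / real (m n)) \<longlonglongrightarrow> lam"
    from part23[OF this(2)] show "weak_conv_m
       (\<lambda>n. distr M borel (\<lambda>\<omega>. sqrt (real n) * (bernstein (ecdf X n \<omega>) (m n) x - F x)))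
       (normal_distr
          (lam * ((1/2) * (\<Sum>i\<in>UNIV. \<Sum>j\<in>UNIV.
              ((if i = j then x $ i else 0) - x $ i * x $ j) * D2F x $ i $ j)))
          (F x * (1 - F x)))"
      unfolding V2_def \<sigma>2_def Bx_def .
  qed
qed


end
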